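(* Let $P$ be a pasture with at most one fundamental element. Then every matroid $M$ has at most one rescaling class of $P$-representations; i.e. any two $P$-representations of $M$ are rescaling equivalent.
   Context: A pasture is a commutative monoid $P$ with absorbing $0$ such that $P^\times=P\setminus\{0\}$ is a group, with a null set $N_P$ of formal sums $a+b+c$ satisfying: $a+0+0\in N_P$ iff $a=0$; closure under multiplying all terms by any $d\in P$; a unique $\epsilon$ with $1+\epsilon+0\in N_P$ (write $-a=\epsilon a$; "$a+b=c$" means $a+b+(-c)\in N_P$). A fundamental element of $P$ is $z\in P^\times$ with $z+z'=1$ for some $z'\in P^\times$. For a matroid $M$ of rank $r$ on finite $E$, a $P$-representation is $\Delta:E^r\to P$ with $\Delta(e_1,\dots,e_r)\neq0$ iff $\{e_1,\dots,e_r\}$ is a basis, $\Delta(e_{\sigma(1)},\dots,e_{\sigma(r)})=\mathrm{sign}(\sigma)\Delta(e_1,\dots,e_r)$, and $\Delta(\mathbf Je_1e_2)\Delta(\mathbf Je_3e_4)-\Delta(\mathbf Je_1e_3)\Delta(\mathbf Je_2e_4)+\Delta(\mathbf Je_1e_4)\Delta(\mathbf Je_2e_3)\in N_P$ for all $\mathbf J\in E^{r-2}$, $e_1,\dots,e_4\in E$ (concatenated tuples). $\Delta,\Delta'$ are rescaling equivalent if $\Delta'(e_1,\dots,e_r)=c\,d(e_1)\cdots d(e_r)\Delta(e_1,\dots,e_r)$ for some $c\in P^\times$, $d:E\to P^\times$. *)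

theory Defs
  imports "HOL-Combinatorics.Permutations"
begin

text \<open>A pasture is given on the carrier UNIV of a type 'p by a multiplication,
  a unit, a zero, and a null set of formal sums a+b+c, represented as triples
  (the null set is required to be closed under permuting the three terms,
  so that it is a set of unordered formal sums).\<close>

definition pasture :: "('p \<Rightarrow> 'p \<Rightarrow> 'p) \<Rightarrow> 'p \<Rightarrow> 'p \<Rightarrow> ('p \<times> 'p \<times> 'p) set \<Rightarrow> bool" where
  "pasture pm one zero N \<longleftrightarrow>
     (\<forall>a b c. pm (pm a b) c = pm a (pm b c)) \<and>
     (\<forall>a b. pm a b = pm b a) \<and>
     (\<forall>a. pm one a = a) \<and>
     (\<forall>a. pm zero a = zero) \<and>
     one \<noteq> zero \<and>
     (\<forall>a b. a \<noteq> zero \<and> b \<noteq> zero \<longrightarrow> pm a b \<noteq> zero) \<and>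
     (\<forall>a. a \<noteq> zero \<longrightarrow> (\<exists>b. b \<noteq> zero \<and> pm a b = one)) \<and>
     (\<forall>a b c. (a, b, c) \<in> N \<longrightarrow> (b, a, c) \<in> N \<and> (b, c, a) \<in> N) \<and>
     (\<forall>a. (a, zero, zero) \<in> N \<longleftrightarrow> a = zero) \<and>
     (\<forall>a b c d. (a, b, c) \<in> N \<longrightarrow> (pm d a, pm d b, pm d c) \<in> N) \<and>
     (\<exists>!e. (one, e, zero) \<in> N)"

definition pepsilon :: "'p \<Rightarrow> 'p \<Rightarrow> ('p \<times> 'p \<times> 'p) set \<Rightarrow> 'p" where
  "pepsilon one zero N = (THE e. (one, e, zero) \<in> N)"

text \<open>z is fundamental iff z is a unit and z + z' = 1 for some unit z',
  i.e. z + z' + (-1) is in the null set, where -1 = epsilon.\<close>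
definition fundamental :: "('p \<Rightarrow> 'p \<Rightarrow> 'p) \<Rightarrow> 'p \<Rightarrow> 'p \<Rightarrow> ('p \<times> 'p \<times> 'p) set \<Rightarrow> 'p \<Rightarrow> bool" where
  "fundamental pm one zero N z \<longleftrightarrow>
     z \<noteq> zero \<and> (\<exists>z'. z' \<noteq> zero \<and> (z, z', pm (pepsilon one zero N) one) \<in> N)"

definition matroid :: "'e set \<Rightarrow> 'e set set \<Rightarrow> bool" where
  "matroid E \<B> \<longleftrightarrow> finite E \<and> \<B> \<subseteq> Pow E \<and> \<B> \<noteq> {} \<and>
     (\<forall>B1\<in>\<B>. \<forall>B2\<in>\<B>. \<forall>x\<in>B1 - B2. \<exists>y\<in>B2 - B1. insert y (B1 - {x}) \<in> \<B>)"

definition matroid_rank :: "'e set \<Rightarrow> 'e set set \<Rightarrow> nat \<Rightarrow> bool" where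
  "matroid_rank E \<B> r \<longleftrightarrow> matroid E \<B> \<and> (\<forall>B\<in>\<B>. card B = r)"

definition tuples :: "'e set \<Rightarrow> nat \<Rightarrow> 'e list set" where
  "tuples E r = {xs. set xs \<subseteq> E \<and> length xs = r}"

definition P_rep ::
  "('p \<Rightarrow> 'p \<Rightarrow> 'p) \<Rightarrow> 'p \<Rightarrow> 'p \<Rightarrow> ('p \<times> 'p \<times> 'p) set \<Rightarrow>
   'e set \<Rightarrow> 'e set set \<Rightarrow> nat \<Rightarrow> ('e list \<Rightarrow> 'p) \<Rightarrow> bool" where
  "P_rep pm one zero N E \<B> r \<Delta> \<longleftrightarrow>
     (let eps = pepsilon one zero N in
     (\<forall>xs\<in>tuples E r. \<Delta> xs \<noteq> zero \<longleftrightarrow> set xs \<in> \<B>) \<and>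
     (\<forall>xs\<in>tuples E r. \<forall>\<sigma>. \<sigma> permutes {..<r} \<longrightarrow>
        \<Delta> (map (\<lambda>i. xs ! \<sigma> i) [0..<r]) =
          (if sign \<sigma> = 1 then \<Delta> xs else pm eps (\<Delta> xs))) \<and>
     (2 \<le> r \<longrightarrow>
       (\<forall>J\<in>tuples E (r - 2). \<forall>e1\<in>E. \<forall>e2\<in>E. \<forall>e3\<in>E. \<forall>e4\<in>E.
          (pm (\<Delta> (J @ [e1, e2])) (\<Delta> (J @ [e3, e4])),
           pm eps (pm (\<Delta> (J @ [e1, e3])) (\<Delta> (J @ [e2, e4]))),
           pm (\<Delta> (J @ [e1, e4])) (\<Delta> (J @ [e2, e3]))) \<in> N)))"

definition rescaling_equiv ::
  "('p \<Rightarrow> 'p \<Rightarrow> 'p) \<Rightarrow> 'p \<Rightarrow> 'p \<Rightarrow> 'e set \<Rightarrow> nat \<Rightarrow>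
   ('e list \<Rightarrow> 'p) \<Rightarrow> ('e list \<Rightarrow> 'p) \<Rightarrow> bool" where
  "rescaling_equiv pm one zero E r \<Delta> \<Delta>' \<longleftrightarrow>
     (\<exists>c d. c \<noteq> zero \<and> (\<forall>e\<in>E. d e \<noteq> zero) \<and>
        (\<forall>xs\<in>tuples E r.
           \<Delta>' xs = pm c (pm (foldr (\<lambda>x acc. pm (d x) acc) xs one) (\<Delta> xs))))"

end

theory Submission
  imports Defs "HOL-Algebra.FiniteProduct"
begin

context comm_group begin
lemma gn2: "x \<in> carrier G \<Longrightarrow> y \<in> carrier G \<Longrightarrow> z \<in> carrier G \<Longrightarrow> (x \<otimes> inv y) \<otimes> z = (x \<otimes> z) \<otimes> inv y"
  by (simp add: m_ac)
lemma gn3: "x \<in> carrier G \<Longrightarrow> y \<in> carrier G \<Longrightarrow> z \<in> carrier G \<Longrightarrow> x \<otimes> (y \<otimes> inv z) = (x \<otimes> y) \<otimes> inv z"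
  by (simp add: m_ac)
lemma gn4: "x \<in> carrier G \<Longrightarrow> y \<in> carrier G \<Longrightarrow> z \<in> carrier G \<Longrightarrow> (x \<otimes> inv y) \<otimes> inv z = x \<otimes> inv (y \<otimes> z)"
  by (simp add: m_ac inv_mult)
lemma gn5: "x \<in> carrier G \<Longrightarrow> y \<in> carrier G \<Longrightarrow> inv (x \<otimes> inv y) = y \<otimes> inv x"
  by (simp add: inv_mult m_comm)
lemma gn7: "x \<in> carrier G \<Longrightarrow> y \<in> carrier G \<Longrightarrow> z \<in> carrier G \<Longrightarrow> w \<in> carrier G \<Longrightarrow>
   (x \<otimes> inv y = z \<otimes> inv w) \<longleftrightarrow> (x \<otimes> w = z \<otimes> y)"
proof -
  assume a: "x \<in> carrier G" "y \<in> carrier G" "z \<in> carrier G" "w \<in> carrier G"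
  have "(x \<otimes> inv y = z \<otimes> inv w) \<longleftrightarrow> (x \<otimes> inv y) \<otimes> (y \<otimes> w) = (z \<otimes> inv w) \<otimes> (y \<otimes> w)"
    using a by (simp add: right_cancel)
  also have "(x \<otimes> inv y) \<otimes> (y \<otimes> w) = x \<otimes> w" using a
    by (metis inv_closed l_inv m_assoc m_closed one_closed r_one l_one)
  also have "(z \<otimes> inv w) \<otimes> (y \<otimes> w) = z \<otimes> y" using a
    by (metis inv_closed l_inv m_assoc m_closed m_comm r_one)
  finally show ?thesis .
qed
lemma gn8: "x \<in> carrier G \<Longrightarrow> y \<in> carrier G \<Longrightarrow> (x \<otimes> inv y = \<one>) \<longleftrightarrow> x = y"
  by (metis gn7 inv_one l_one one_closed r_one)
lemma gn8': "x \<in> carrier G \<Longrightarrow> y \<in> carrier G \<Longrightarrow> (\<one> = x \<otimes> inv y) \<longleftrightarrow> x = y"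
  by (metis gn8)
lemma gn9: "x \<in> carrier G \<Longrightarrow> y \<in> carrier G \<Longrightarrow> z \<in> carrier G \<Longrightarrow> (x \<otimes> inv y = z) \<longleftrightarrow> x = z \<otimes> y"
  by (metis gn7 inv_one one_closed r_one)
lemma gn9': "x \<in> carrier G \<Longrightarrow> y \<in> carrier G \<Longrightarrow> z \<in> carrier G \<Longrightarrow> (z = x \<otimes> inv y) \<longleftrightarrow> z \<otimes> y = x"
  by (metis gn9)
lemma gcan1: "x \<in> carrier G \<Longrightarrow> y \<in> carrier G \<Longrightarrow> x \<otimes> (inv x \<otimes> y) = y"
  by (metis inv_closed l_one m_assoc r_inv)
lemma gcan2: "x \<in> carrier G \<Longrightarrow> y \<in> carrier G \<Longrightarrow> inv x \<otimes> (x \<otimes> y) = y"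
  by (metis inv_closed l_one m_assoc l_inv)
lemma gcanc: "a \<in> carrier G \<Longrightarrow> b \<in> carrier G \<Longrightarrow> (a \<otimes> inv b) \<otimes> (b \<otimes> inv a) = \<one>"
  by (simp add: m_assoc gcan2)
lemma gsolve: "a \<in> carrier G \<Longrightarrow> b \<in> carrier G \<Longrightarrow> c \<in> carrier G \<Longrightarrow> d \<in> carrier G \<Longrightarrow>
  a \<otimes> b = c \<otimes> d \<Longrightarrow> b = (c \<otimes> d) \<otimes> inv a"
  by (metis gn9 m_closed m_comm)
lemma gW: "a \<in> carrier G \<Longrightarrow> x \<in> carrier G \<Longrightarrow> c \<in> carrier G \<Longrightarrow> d \<in> carrier G \<Longrightarrow>
  a \<otimes> x = c \<otimes> d \<Longrightarrow> x \<otimes> inv d = c \<otimes> inv a"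
  by (metis gn7 m_comm)
lemma gm: "x \<in> carrier G \<Longrightarrow> y \<in> carrier G \<Longrightarrow> z \<in> carrier G \<Longrightarrow> w \<in> carrier G \<Longrightarrow>
  (x \<otimes> inv y) \<otimes> (z \<otimes> inv w) = (x \<otimes> z) \<otimes> inv (y \<otimes> w)"
  by (simp add: inv_mult m_ac)
lemma gV: "a \<in> carrier G \<Longrightarrow> b \<in> carrier G \<Longrightarrow> c \<in> carrier G \<Longrightarrow> d \<in> carrier G \<Longrightarrow>
  a \<otimes> inv ((b \<otimes> c) \<otimes> inv d) = (a \<otimes> inv d) \<otimes> (d \<otimes> inv b) \<otimes> (d \<otimes> inv c)"
proof -
  assume c: "a \<in> carrier G" "b \<in> carrier G" "c \<in> carrier G" "d \<in> carrier G"
  have L: "a \<otimes> inv ((b \<otimes> c) \<otimes> inv d) = (a \<otimes> d) \<otimes> inv (b \<otimes> c)"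
    using c by (simp only: gn5 m_closed inv_closed) (simp add: m_assoc)
  show ?thesis unfolding L using c by (simp only: gm gn7 m_closed inv_closed) (simp add: m_ac)
qed
lemma g4: "p \<in> carrier G \<Longrightarrow> q \<in> carrier G \<Longrightarrow> s \<in> carrier G \<Longrightarrow> e \<in> carrier G \<Longrightarrow>
  ((p \<otimes> q) \<otimes> inv s \<otimes> inv e) \<otimes> ((e \<otimes> inv p) \<otimes> ((s \<otimes> inv e) \<otimes> ((e \<otimes> inv q) \<otimes> \<one>))) = \<one>"
  by (simp only: gm gn4 gn8 r_one m_closed inv_closed) (simp add: m_ac)
lemma g4': "p \<in> carrier G \<Longrightarrow> q \<in> carrier G \<Longrightarrow> s \<in> carrier G \<Longrightarrow> e \<in> carrier G \<Longrightarrow>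
  (e \<otimes> inv ((p \<otimes> q) \<otimes> inv s)) \<otimes> ((q \<otimes> inv e) \<otimes> ((e \<otimes> inv s) \<otimes> ((p \<otimes> inv e) \<otimes> \<one>))) = \<one>"
proof -
  assume c: "p \<in> carrier G" "q \<in> carrier G" "s \<in> carrier G" "e \<in> carrier G"
  have L: "e \<otimes> inv ((p \<otimes> q) \<otimes> inv s) = (e \<otimes> s) \<otimes> inv (p \<otimes> q)"
    using c by (simp only: gn5 m_closed inv_closed) (simp add: m_assoc)
  show ?thesis unfolding L using c by (simp only: gm gn8 r_one m_closed inv_closed) (simp add: m_ac)
qed
lemmas gnorm = gn2 gn3 gn4 gn5 gn7 gn8 gn8'
end

locale core = comm_group G for G (structure) +
  fixes E :: "'e set" and BB :: "'e set set" and r :: nat and f :: "'e set \<Rightarrow> 'a"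
  assumes mr: "matroid_rank E BB r"
    and fc: "\<And>S. f S \<in> carrier G"
    and Q: "\<And>J a b c d. a \<notin> J \<Longrightarrow> b \<notin> J \<Longrightarrow> c \<notin> J \<Longrightarrow> d \<notin> J \<Longrightarrow> distinct [a,b,c,d] \<Longrightarrow>
      J \<union> {a,b} \<in> BB \<Longrightarrow> J \<union> {c,d} \<in> BB \<Longrightarrow> J \<union> {a,c} \<in> BB \<Longrightarrow> J \<union> {b,d} \<in> BB \<Longrightarrow>
      f (J \<union> {a,b}) \<otimes> f (J \<union> {c,d}) = f (J \<union> {a,c}) \<otimes> f (J \<union> {b,d})"
begin

lemma bE: "B \<in> BB \<Longrightarrow> B \<subseteq> E" using mr unfolding matroid_rank_def matroid_def by blast
lemma finE: "finite E" using mr unfolding matroid_rank_def matroid_def by blast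
lemma bfin: "B \<in> BB \<Longrightarrow> finite B" using bE finE finite_subset by blast
lemma bcard: "B \<in> BB \<Longrightarrow> card B = r" using mr unfolding matroid_rank_def by blast
lemma bne: "BB \<noteq> {}" using mr unfolding matroid_rank_def matroid_def by blast
lemma exch: "B1 \<in> BB \<Longrightarrow> B2 \<in> BB \<Longrightarrow> x \<in> B1 - B2 \<Longrightarrow> \<exists>y\<in>B2 - B1. insert y (B1 - {x}) \<in> BB"
  using mr unfolding matroid_rank_def matroid_def by blast

lemma L2:
  assumes "a \<notin> J" "b \<notin> J" "c \<notin> J" "d \<notin> J" "distinct [a,b,c,d]"
    "J \<union> {a,b} \<in> BB" "J \<union> {c,d} \<in> BB"
  shows "(J \<union> {a,c} \<in> BB \<and> J \<union> {b,d} \<in> BB) \<or> (J \<union> {a,d} \<in> BB \<and> J \<union> {b,c} \<in> BB)"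
proof -
  let ?B1 = "J \<union> {a,b}" and ?B2 = "J \<union> {c,d}"
  have e: "\<And>x y z. x \<notin> J \<Longrightarrow> y \<notin> J \<Longrightarrow> x \<noteq> y \<Longrightarrow> insert z ((J \<union> {x,y}) - {x}) = J \<union> {y,z}"
    by auto
  have sw: "\<And>x y. J \<union> {x,y} = J \<union> {y,x}" by auto
  have d1: "?B2 - ?B1 = {c,d}" "?B1 - ?B2 = {a,b}" using assms by auto
  have i1: "\<And>z. insert z (?B1 - {a}) = J \<union> {b,z}" "\<And>z. insert z (?B1 - {b}) = J \<union> {a,z}"
    "\<And>z. insert z (?B2 - {c}) = J \<union> {d,z}" "\<And>z. insert z (?B2 - {d}) = J \<union> {c,z}"
    using assms by auto
  from exch[OF assms(6,7), of a] obtain y where y: "y \<in> {c,d}" "J \<union> {b,y} \<in> BB"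
    unfolding d1 i1 by auto
  from exch[OF assms(6,7), of b] obtain y' where y': "y' \<in> {c,d}" "J \<union> {a,y'} \<in> BB"
    unfolding d1 i1 by auto
  from exch[OF assms(7,6), of c] obtain z where z: "z \<in> {a,b}" "J \<union> {d,z} \<in> BB"
    unfolding d1 i1 by auto
  from exch[OF assms(7,6), of d] obtain z' where z': "z' \<in> {a,b}" "J \<union> {c,z'} \<in> BB"
    unfolding d1 i1 by auto
  show ?thesis using y y' z z' sw by auto
qed

lemma fp2: assumes "d \<in> E \<rightarrow> carrier G" "J \<subseteq> E" "finite J" "x \<in> E" "y \<in> E" "x \<notin> J" "y \<notin> J" "x \<noteq> y"
  shows "finprod G d (J \<union> {x,y}) = d x \<otimes> (d y \<otimes> finprod G d J)"
proof -
  have dJ: "d \<in> J \<rightarrow> carrier G" using assms by auto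
  have "J \<union> {x,y} = insert x (insert y J)" by auto
  then show ?thesis using assms dJ by (simp add: finprod_insert Pi_def)
qed

lemma stepA:
  assumes B0: "B0 \<in> BB" and c: "c \<in> carrier G" and d: "d \<in> E \<rightarrow> carrier G"
   and H: "\<And>B. B \<in> BB \<Longrightarrow> card (B - B0) \<le> 1 \<Longrightarrow> f B = c \<otimes> finprod G d B"
  shows "B \<in> BB \<Longrightarrow> f B = c \<otimes> finprod G d B"
proof -
  have "\<forall>B. B \<in> BB \<longrightarrow> card (B - B0) = k \<longrightarrow> f B = c \<otimes> finprod G d B" for k
  proof (induction k rule: less_induct)
    case (less k)
    show ?case
    proof (intro allI impI)
      fix B assume B: "B \<in> BB" and k: "card (B - B0) = k"
      show "f B = c \<otimes> finprod G d B"
      proof (cases "k \<le> 1")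
        case True then show ?thesis using H B k by auto
      next
        case False
        have fin: "finite (B - B0)" using bfin[OF B] by auto
        have "B - B0 \<noteq> {}" using False k by (metis card.empty le0)
        then obtain a where a: "a \<in> B - B0" by blast
        have "card (B - B0 - {a}) \<ge> 1" using False k a fin by (simp add: card_Diff_singleton)
        then have "B - B0 - {a} \<noteq> {}" by (metis card.empty not_one_le_zero)
        then obtain b where b: "b \<in> B - B0 - {a}" by blast
        obtain c1 where c1: "c1 \<in> B0 - B" "insert c1 (B - {a}) \<in> BB" using exch[OF B B0, of a] a by auto
        let ?B' = "insert c1 (B - {a})"
        have "b \<in> ?B' - B0" using b by auto
        then obtain d1 where d1: "d1 \<in> B0 - ?B'" "insert d1 (?B' - {b}) \<in> BB" using exch[OF c1(2) B0, of b] by auto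
        define J where "J = B - {a,b}"
        have BJ: "B = J \<union> {a,b}" using a b J_def by auto
        have J2: "insert d1 (?B' - {b}) = J \<union> {c1,d1}" using a b c1 d1 J_def by auto
        have dst: "distinct [a,b,c1,d1]" using a b c1 d1 by auto
        have nJ: "a \<notin> J" "b \<notin> J" "c1 \<notin> J" "d1 \<notin> J" using J_def c1 d1 by auto
        have BJB: "J \<union> {a,b} \<in> BB" "J \<union> {c1,d1} \<in> BB" using B BJ d1 J2 by auto
        have JE: "J \<subseteq> E" "finite J" using bE[OF B] bfin[OF B] J_def by auto
        have inE: "a \<in> E" "b \<in> E" "c1 \<in> E" "d1 \<in> E" using a b c1 d1 bE[OF B] bE[OF B0] by auto
        have fin2: "\<And>c' d'. c' \<in> {c1,d1} \<Longrightarrow> d' \<in> {c1,d1} \<Longrightarrow> c' \<noteq> d' \<Longrightarrow>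
           J \<union> {c',d'} \<in> BB \<Longrightarrow> J \<union> {a,c'} \<in> BB \<Longrightarrow> J \<union> {b,d'} \<in> BB \<Longrightarrow> f B = c \<otimes> finprod G d B"
        proof -
          fix c' d' assume cd: "c' \<in> {c1,d1}" "d' \<in> {c1,d1}" "c' \<noteq> d'"
            and b1: "J \<union> {c',d'} \<in> BB" and b2: "J \<union> {a,c'} \<in> BB" and b3: "J \<union> {b,d'} \<in> BB"
          have cd0: "c' \<in> B0" "d' \<in> B0" "c' \<notin> B" "d' \<notin> B" using cd c1 d1 a by auto
          have s1: "(J \<union> {a,c'}) - B0 = (B - B0) - {b}" using cd0 a b J_def by auto
          have s2: "(J \<union> {b,d'}) - B0 = (B - B0) - {a}" using cd0 a b J_def by auto
          have s3: "(J \<union> {c',d'}) - B0 = (B - B0) - {a,b}" using cd0 a b J_def by auto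
          have k1: "card ((J \<union> {a,c'}) - B0) < k" unfolding s1 using b k fin False
            by (simp add: card_Diff_singleton)
          have k2: "card ((J \<union> {b,d'}) - B0) < k" unfolding s2 using a k fin False
            by (simp add: card_Diff_singleton)
          have k3: "card ((J \<union> {c',d'}) - B0) < k" unfolding s3 using a b k fin False
            by (metis Diff_insert2 card_Diff1_less diff_le_self le_less_trans card_Diff_singleton_if DiffD1 DiffI singletonD)
          have f1: "f (J \<union> {a,c'}) = c \<otimes> finprod G d (J \<union> {a,c'})" using less k1 b2 by blast
          have f2: "f (J \<union> {b,d'}) = c \<otimes> finprod G d (J \<union> {b,d'})" using less k2 b3 by blast
          have f3: "f (J \<union> {c',d'}) = c \<otimes> finprod G d (J \<union> {c',d'})" using less k3 b1 by blast
          have dst': "distinct [a,b,c',d']" using dst cd cd0 a b by auto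
          have nJ': "c' \<notin> J" "d' \<notin> J" using nJ cd by auto
          have Qe: "f (J \<union> {a,b}) \<otimes> f (J \<union> {c',d'}) = f (J \<union> {a,c'}) \<otimes> f (J \<union> {b,d'})"
            using Q[OF nJ(1,2) nJ' dst' BJB(1) b1 b2 b3] .
          have inE': "c' \<in> E" "d' \<in> E" using cd inE by auto
          have dE: "d a \<in> carrier G" "d b \<in> carrier G" "d c' \<in> carrier G" "d d' \<in> carrier G"
            using d inE inE' by auto
          have PJ: "finprod G d J \<in> carrier G" using d JE by (auto intro: finprod_closed)
          note p = fp2[OF d JE]
          have e1: "finprod G d (J \<union> {a,c'}) = d a \<otimes> (d c' \<otimes> finprod G d J)"
            using p[of a c'] inE inE' nJ nJ' dst' by auto
          have e2: "finprod G d (J \<union> {b,d'}) = d b \<otimes> (d d' \<otimes> finprod G d J)"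
            using p[of b d'] inE inE' nJ nJ' dst' by auto
          have e3: "finprod G d (J \<union> {c',d'}) = d c' \<otimes> (d d' \<otimes> finprod G d J)"
            using p[of c' d'] inE inE' nJ nJ' dst' by auto
          have e4: "finprod G d (J \<union> {a,b}) = d a \<otimes> (d b \<otimes> finprod G d J)"
            using p[of a b] inE inE' nJ nJ' dst' by auto
          have "f B \<otimes> (c \<otimes> (d c' \<otimes> (d d' \<otimes> finprod G d J)))
              = (c \<otimes> (d a \<otimes> (d b \<otimes> finprod G d J))) \<otimes> (c \<otimes> (d c' \<otimes> (d d' \<otimes> finprod G d J)))"
            using Qe f1 f2 f3 e1 e2 e3 BJ dE PJ c by (simp add: m_ac)
          then have "f B = c \<otimes> (d a \<otimes> (d b \<otimes> finprod G d J))"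
            using dE PJ c fc by (simp add: right_cancel)
          then show "f B = c \<otimes> finprod G d B" using e4 BJ by simp
        qed
        from L2[OF nJ dst BJB] show ?thesis
        proof
          assume "J \<union> {a, c1} \<in> BB \<and> J \<union> {b, d1} \<in> BB"
          then show ?thesis using fin2[of c1 d1] BJB dst by auto
        next
          assume h: "J \<union> {a, d1} \<in> BB \<and> J \<union> {b, c1} \<in> BB"
          have "J \<union> {d1,c1} \<in> BB" using BJB by (simp add: insert_commute)
          then show ?thesis using fin2[of d1 c1] h dst by auto
        qed
      qed
    qed
  qed
  then show "B \<in> BB \<Longrightarrow> f B = c \<otimes> finprod G d B" by blast
qed

end

context core begin

definition ed :: "'e set \<Rightarrow> 'e \<Rightarrow> 'e \<Rightarrow> bool" where
  "ed B u w \<longleftrightarrow> (u \<in> B \<and> w \<notin> B \<and> insert w (B - {u}) \<in> BB) \<or> (w \<in> B \<and> u \<notin> B \<and> insert u (B - {w}) \<in> BB)"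

definition wt :: "'e set \<Rightarrow> 'e \<Rightarrow> 'e \<Rightarrow> 'a" where
  "wt B u w = (if u \<in> B then f (insert w (B - {u})) \<otimes> inv (f B) else f B \<otimes> inv (f (insert u (B - {w}))))"

fun pv :: "'e set \<Rightarrow> 'e list \<Rightarrow> 'a" where
  "pv B [] = \<one>" | "pv B [u] = \<one>" | "pv B (u # w # p) = wt B u w \<otimes> pv B (w # p)"

fun isw :: "'e set \<Rightarrow> 'e list \<Rightarrow> bool" where
  "isw B [] = True" | "isw B [u] = True" | "isw B (u # w # p) = (ed B u w \<and> isw B (w # p))"

definition cw :: "'e set \<Rightarrow> 'e list \<Rightarrow> bool" where
  "cw B p \<longleftrightarrow> isw B p \<and> p \<noteq> [] \<and> hd p = last p"

lemma ed_sym: "ed B u w \<longleftrightarrow> ed B w u" unfolding ed_def by blast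
lemma ed_irr: "ed B u w \<Longrightarrow> (u \<in> B \<longleftrightarrow> w \<notin> B)" unfolding ed_def by blast

lemma wt_c[simp]: "wt B u w \<in> carrier G" unfolding wt_def using fc by auto
lemma pv_c[simp]: "pv B p \<in> carrier G" by (induction B p rule: pv.induct) auto

lemma wt_inv: "ed B u w \<Longrightarrow> wt B u w \<otimes> wt B w u = \<one>"
  unfolding ed_def wt_def using fc by (auto simp: gcanc)

lemma wt_inv2: "ed B u w \<Longrightarrow> wt B w u = inv (wt B u w)"
  using wt_inv[of B u w] by (metis inv_equality m_comm wt_c)

lemma pv_app: "pv B (p @ u # q) = pv B (p @ [u]) \<otimes> pv B (u # q)"
proof (induction p)
  case Nil then show ?case by simp
next
  case (Cons a p)
  then show ?case by (cases p) (auto simp: m_assoc)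
qed

lemma isw_app: "isw B (p @ u # q) \<longleftrightarrow> isw B (p @ [u]) \<and> isw B (u # q)"
proof (induction p)
  case Nil then show ?case by simp
next
  case (Cons a p)
  then show ?case by (cases p) auto
qed

lemma pv_rev: "isw B p \<Longrightarrow> pv B (rev p) = inv (pv B p)"
proof (induction B p rule: pv.induct)
  case (3 B u w p)
  have "pv B (rev (u # w # p)) = pv B (rev p @ [w] @ [u])" by simp
  also have "\<dots> = pv B (rev p @ [w]) \<otimes> pv B [w, u]" using pv_app[of B "rev p" w "[u]"] by simp
  also have "\<dots> = inv (pv B (w # p)) \<otimes> wt B w u" using 3 by simp
  also have "\<dots> = inv (wt B u w \<otimes> pv B (w # p))"
    using 3 wt_inv2[of B u w] by (simp add: inv_mult m_comm)
  finally show ?case by simp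
qed auto

lemma isw_rev: "isw B p \<Longrightarrow> isw B (rev p)"
proof (induction B p rule: isw.induct)
  case (3 B u w p)
  then show ?case using isw_app[of B "rev p" w "[u]"] ed_sym by simp
qed auto

end

context core begin

lemma rel_W:
  assumes B: "B \<in> BB" and h: "x1 \<in> B" "x \<in> B" "x1 \<noteq> x" "y1 \<notin> B" "y \<notin> B" "y1 \<noteq> y"
    and B1: "insert y1 (B - {x1}) \<in> BB" and Bxy: "insert y (B - {x}) \<in> BB"
    and ne: "insert y (B - {x1}) \<notin> BB \<or> insert y1 (B - {x}) \<notin> BB"
  shows "insert y (insert y1 (B - {x1}) - {x}) \<in> BB \<and>
    f B \<otimes> f (insert y (insert y1 (B - {x1}) - {x})) = f (insert y (B - {x})) \<otimes> f (insert y1 (B - {x1}))"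
proof -
  define J where "J = B - {x1,x}"
  have s: "B = J \<union> {x1,x}" "insert y1 (B-{x1}) = J \<union> {x,y1}" "insert y (B - {x}) = J \<union> {x1,y}"
    "insert y (B - {x1}) = J \<union> {y,x}" "insert y1 (B - {x}) = J \<union> {x1,y1}"
    "insert y (insert y1 (B - {x1}) - {x}) = J \<union> {y,y1}"
    using h J_def by auto
  have nJ: "x1 \<notin> J" "x \<notin> J" "y \<notin> J" "y1 \<notin> J" using h J_def by auto
  have d1: "distinct [x1,y,x,y1]" using h by auto
  have "(J \<union> {x1,x} \<in> BB \<and> J \<union> {y,y1} \<in> BB) \<or> (J \<union> {x1,y1} \<in> BB \<and> J \<union> {y,x} \<in> BB)"
    using L2[of x1 J y x y1] nJ d1 Bxy B1 s by auto
  then have b: "J \<union> {y,y1} \<in> BB" using ne s by auto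
  have d2: "distinct [x1,x,y,y1]" using h by auto
  have "f (J \<union> {x1,x}) \<otimes> f (J \<union> {y,y1}) = f (J \<union> {x1,y}) \<otimes> f (J \<union> {x,y1})"
    using Q[of x1 J x y y1] nJ d2 B b Bxy B1 s by auto
  then show ?thesis using b s by simp
qed

lemma edgeW0:
  assumes B: "B \<in> BB" and x1: "x1 \<in> B" and y1: "y1 \<notin> B" and B1: "insert y1 (B - {x1}) \<in> BB"
    and e: "ed B a b" and aB: "a \<in> B" and ab: "a \<notin> {x1,y1}" "b \<notin> {x1,y1}"
    and z: "\<exists>z\<in>{a,b}. \<not> ed B x1 z \<and> \<not> ed B z y1"
  shows "ed (insert y1 (B - {x1})) a b \<and> wt (insert y1 (B - {x1})) a b = wt B a b"
proof -
  have bB: "b \<notin> B" and Bab: "insert b (B - {a}) \<in> BB" using e aB unfolding ed_def by auto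
  have ne: "insert b (B - {x1}) \<notin> BB \<or> insert y1 (B - {a}) \<notin> BB"
    using z x1 y1 aB bB unfolding ed_def by auto
  have R: "insert b (insert y1 (B - {x1}) - {a}) \<in> BB \<and>
    f B \<otimes> f (insert b (insert y1 (B - {x1}) - {a})) = f (insert b (B - {a})) \<otimes> f (insert y1 (B - {x1}))"
    using rel_W[OF B x1 aB _ y1 bB _ B1 Bab ne] ab by auto
  have "ed (insert y1 (B - {x1})) a b" using R aB bB ab unfolding ed_def by auto
  moreover have "wt (insert y1 (B - {x1})) a b = wt B a b"
    using R aB ab fc gW unfolding wt_def by auto
  ultimately show ?thesis by blast
qed

lemma edgeW:
  assumes B: "B \<in> BB" and x1: "x1 \<in> B" and y1: "y1 \<notin> B" and B1: "insert y1 (B - {x1}) \<in> BB"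
    and e: "ed B a b" and ab: "a \<notin> {x1,y1}" "b \<notin> {x1,y1}"
    and z: "\<exists>z\<in>{a,b}. \<not> ed B x1 z \<and> \<not> ed B z y1"
  shows "ed (insert y1 (B - {x1})) a b \<and> wt (insert y1 (B - {x1})) a b = wt B a b"
proof (cases "a \<in> B")
  case True then show ?thesis using edgeW0[OF B x1 y1 B1 e True ab z] by blast
next
  case False
  then have bB: "b \<in> B" using e unfolding ed_def by auto
  have e': "ed B b a" using e ed_sym by blast
  have z': "\<exists>z\<in>{b,a}. \<not> ed B x1 z \<and> \<not> ed B z y1" using z by blast
  have R: "ed (insert y1 (B - {x1})) b a \<and> wt (insert y1 (B - {x1})) b a = wt B b a"
    using edgeW0[OF B x1 y1 B1 e' bB ab(2,1) z'] .
  then have "ed (insert y1 (B - {x1})) a b" using ed_sym by blast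
  moreover have "wt (insert y1 (B - {x1})) a b = wt B a b"
    using R wt_inv2[of "insert y1 (B - {x1})" b a] wt_inv2[OF e'] by simp
  ultimately show ?thesis by blast
qed

lemma lemV:
  assumes B: "B \<in> BB" and h: "x1 \<in> B" "x2 \<in> B" "x1 \<noteq> x2" "y1 \<notin> B" "yk \<notin> B" "y1 \<noteq> yk"
    and e: "ed B x1 y1" "ed B x2 y1" "ed B x1 yk" "\<not> ed B x2 yk"
  shows "ed (insert y1 (B - {x1})) yk x2 \<and>
     wt (insert y1 (B - {x1})) yk x2 = wt B x1 y1 \<otimes> wt B y1 x2 \<otimes> wt B yk x1"
proof -
  define J where "J = B - {x1,x2}"
  let ?B1 = "insert y1 (B - {x1})"
  have s: "B = J \<union> {x1,x2}" "?B1 = J \<union> {x2,y1}" "insert y1 (B - {x2}) = J \<union> {x1,y1}"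
    "insert yk (B - {x1}) = J \<union> {x2,yk}" "insert yk (B - {x2}) = J \<union> {yk,x1}"
    "insert yk (?B1 - {x2}) = J \<union> {y1,yk}"
    using h J_def by auto
  have nJ: "x1 \<notin> J" "x2 \<notin> J" "y1 \<notin> J" "yk \<notin> J" using h J_def by auto
  have bs: "?B1 \<in> BB" "insert y1 (B - {x2}) \<in> BB" "insert yk (B - {x1}) \<in> BB" "insert yk (B - {x2}) \<notin> BB"
    using e h unfolding ed_def by auto
  have "(J \<union> {x2,x1} \<in> BB \<and> J \<union> {yk,y1} \<in> BB) \<or> (J \<union> {x2,y1} \<in> BB \<and> J \<union> {yk,x1} \<in> BB)"
    using L2[of x2 J yk x1 y1] nJ h bs s by auto
  then have b: "J \<union> {y1,yk} \<in> BB" using bs s by (auto simp: insert_commute)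
  have rel: "f (J \<union> {x1,x2}) \<otimes> f (J \<union> {y1,yk}) = f (J \<union> {x1,y1}) \<otimes> f (J \<union> {x2,yk})"
    using Q[of x1 J x2 y1 yk] nJ h B b bs s by auto
  have ed1: "ed ?B1 yk x2" using b s h unfolding ed_def by auto
  let ?X = "f (insert yk (?B1 - {x2}))"
  have rel': "f B \<otimes> ?X = f (insert y1 (B - {x2})) \<otimes> f (insert yk (B - {x1}))"
    apply (subst s(6)) apply (subst s(3)) apply (subst s(4)) apply (subst s(1)) by (rule rel)
  have X: "?X = (f (insert y1 (B - {x2})) \<otimes> f (insert yk (B - {x1}))) \<otimes> inv (f B)"
    using gsolve[OF fc fc fc fc rel'] .
  have "wt ?B1 yk x2 = f ?B1 \<otimes> inv ?X" using h unfolding wt_def by auto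
  also have "\<dots> = wt B x1 y1 \<otimes> wt B y1 x2 \<otimes> wt B yk x1"
  proof -
    have w: "wt B x1 y1 = f ?B1 \<otimes> inv (f B)" "wt B y1 x2 = f B \<otimes> inv (f (insert y1 (B - {x2})))"
      "wt B yk x1 = f B \<otimes> inv (f (insert yk (B - {x1})))" using h unfolding wt_def by auto
    show ?thesis unfolding X w by (rule gV[OF fc fc fc fc])
  qed
  finally show ?thesis using ed1 by blast
qed

lemma cyc4:
  assumes B: "B \<in> BB" and h: "x1 \<in> B" "x2 \<in> B" "x1 \<noteq> x2" "y1 \<notin> B" "y2 \<notin> B" "y1 \<noteq> y2"
    and e: "ed B x1 y1" "ed B x2 y1" "ed B x2 y2" "ed B x1 y2"
  shows "f (insert y1 (B - {x1})) = (f (insert y1 (B - {x2})) \<otimes> f (insert y2 (B - {x1}))) \<otimes> inv (f (insert y2 (B - {x2})))"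
proof -
  define J where "J = B - {x1,x2}"
  have s: "insert y1 (B - {x1}) = J \<union> {x2,y1}" "insert y1 (B - {x2}) = J \<union> {y1,x1}"
    "insert y2 (B - {x1}) = J \<union> {x2,y2}" "insert y2 (B - {x2}) = J \<union> {y2,x1}"
    using h J_def by auto
  have nJ: "x1 \<notin> J" "x2 \<notin> J" "y1 \<notin> J" "y2 \<notin> J" using h J_def by auto
  have bs: "J \<union> {x2,y1} \<in> BB" "J \<union> {y1,x1} \<in> BB" "J \<union> {x2,y2} \<in> BB" "J \<union> {y2,x1} \<in> BB"
    using e h s unfolding ed_def by auto
  have "f (J \<union> {x2,y1}) \<otimes> f (J \<union> {y2,x1}) = f (J \<union> {x2,y2}) \<otimes> f (J \<union> {y1,x1})"
    using Q[of x2 J y1 y2 x1] nJ h bs by auto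
  then have "f (J \<union> {y2,x1}) \<otimes> f (J \<union> {x2,y1}) = f (J \<union> {y1,x1}) \<otimes> f (J \<union> {x2,y2})"
    by (metis fc m_comm)
  from gsolve[OF fc fc fc fc this] show ?thesis unfolding s .
qed

end

fun allp :: "('e \<Rightarrow> 'e \<Rightarrow> bool) \<Rightarrow> 'e list \<Rightarrow> bool" where
  "allp P [] = True" | "allp P [u] = True" | "allp P (u # w # p) = (P u w \<and> allp P (w # p))"

lemma allp_mono: "allp P m \<Longrightarrow> (\<And>a b. P a b \<Longrightarrow> P' a b) \<Longrightarrow> allp P' m"
  by (induction P m rule: allp.induct) auto

lemma allp_in: "q \<noteq> [] \<Longrightarrow> allp (\<lambda>a b. a \<in> set q \<or> b \<in> set q) (x # q @ [y])"
proof (induction q arbitrary: x)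
  case Nil then show ?case by simp
next
  case (Cons c q')
  show ?case
  proof (cases "q' = []")
    case True then show ?thesis by simp
  next
    case False
    have "allp (\<lambda>a b. a \<in> set q' \<or> b \<in> set q') (c # q' @ [y])" using Cons False by blast
    then have "allp (\<lambda>a b. a \<in> set (c # q') \<or> b \<in> set (c # q')) (c # q' @ [y])"
      by (rule allp_mono) auto
    then show ?thesis using False by (cases q') auto
  qed
qed

context core begin

lemma midpath:
  assumes B: "B \<in> BB" and x1: "x1 \<in> B" and y1: "y1 \<notin> B" and B1: "insert y1 (B - {x1}) \<in> BB"
    and Z: "\<forall>z\<in>Z. \<not> ed B x1 z \<and> \<not> ed B z y1"
  shows "isw B m \<Longrightarrow> set m \<inter> {x1,y1} = {} \<Longrightarrow> allp (\<lambda>a b. a \<in> Z \<or> b \<in> Z) m \<Longrightarrow>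
    isw (insert y1 (B - {x1})) m \<and> pv (insert y1 (B - {x1})) m = pv B m"
proof (induction m rule: induct_list012)
  case (3 u w p)
  have e: "ed B u w" using 3 by simp
  have z: "\<exists>z\<in>{u,w}. \<not> ed B x1 z \<and> \<not> ed B z y1" using 3 Z by auto
  have W: "ed (insert y1 (B - {x1})) u w \<and> wt (insert y1 (B - {x1})) u w = wt B u w"
    using edgeW[OF B x1 y1 B1 e _ _ z] 3 by auto
  have "isw (insert y1 (B - {x1})) (w # p) \<and> pv (insert y1 (B - {x1})) (w # p) = pv B (w # p)"
    using 3 by auto
  then show ?case using W by simp
qed auto

lemma pivot:
  assumes B: "B \<in> BB" and x1: "x1 \<in> B" and e1: "ed B x1 y1" and e2: "ed B y1 x2" and e3: "ed B yk x1"
   and iw: "isw B (x2 # q @ [yk])" and qn: "q \<noteq> []" and ds: "distinct (x1 # y1 # x2 # q @ [yk])"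
   and n1: "\<not> ed B x2 yk" and n2: "\<forall>z\<in>set q. \<not> ed B x1 z \<and> \<not> ed B z y1"
  shows "insert y1 (B - {x1}) \<in> BB \<and> isw (insert y1 (B - {x1})) (x2 # q @ [yk]) \<and>
    pv (insert y1 (B - {x1})) (x2 # q @ [yk]) = pv B (x2 # q @ [yk]) \<and>
    ed (insert y1 (B - {x1})) yk x2 \<and>
    wt (insert y1 (B - {x1})) yk x2 = wt B x1 y1 \<otimes> wt B y1 x2 \<otimes> wt B yk x1"
proof -
  have y1: "y1 \<notin> B" using e1 x1 ed_irr by blast
  have x2: "x2 \<in> B" using e2 y1 ed_irr by blast
  have yk: "yk \<notin> B" using e3 x1 ed_irr by blast
  have B1: "insert y1 (B - {x1}) \<in> BB" using e1 x1 y1 unfolding ed_def by auto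
  have M: "isw (insert y1 (B - {x1})) (x2 # q @ [yk]) \<and> pv (insert y1 (B - {x1})) (x2 # q @ [yk]) = pv B (x2 # q @ [yk])"
    using midpath[OF B x1 y1 B1 n2 iw _ allp_in[OF qn]] ds by auto
  have V: "ed (insert y1 (B - {x1})) yk x2 \<and>
     wt (insert y1 (B - {x1})) yk x2 = wt B x1 y1 \<otimes> wt B y1 x2 \<otimes> wt B yk x1"
    using lemV[OF B x1 x2 _ y1 yk _ e1 _ _ n1] e2 e3 ed_sym ds by auto
  show ?thesis using B1 M V by blast
qed

end

context core begin

lemma walk_split_rep:
  assumes p: "p = as @ [v] @ bs @ [v] @ cs @ [u]" and cc: "cw B p"
  shows "cw B (v # bs @ [v]) \<and> cw B (as @ v # cs @ [u]) \<and>
    pv B p = pv B (as @ [v]) \<otimes> (pv B (v # bs @ [v]) \<otimes> pv B (v # cs @ [u])) \<and>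
    pv B (as @ v # cs @ [u]) = pv B (as @ [v]) \<otimes> pv B (v # cs @ [u])"
proof -
  have iw: "isw B p" and hl: "hd p = last p" using cc unfolding cw_def by auto
  have p2: "p = as @ v # (bs @ v # (cs @ [u]))" using p by simp
  have t: "v # bs @ v # cs @ [u] = (v # bs) @ v # (cs @ [u])" by simp
  have i1: "isw B (as @ [v])" "isw B (v # bs @ [v])" "isw B (v # cs @ [u])"
  proof -
    have a: "isw B (as @ [v]) \<and> isw B (v # bs @ v # cs @ [u])"
      using iw isw_app[of B as v "bs @ v # cs @ [u]"] p2 by simp
    have b: "isw B (v # bs @ v # cs @ [u]) = (isw B (v # bs @ [v]) \<and> isw B (v # cs @ [u]))"
      using isw_app[of B "v # bs" v "cs @ [u]"] by simp
    show "isw B (as @ [v])" "isw B (v # bs @ [v])" "isw B (v # cs @ [u])" using a b by auto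
  qed
  have "isw B (as @ v # cs @ [u])" using i1 isw_app[of B as v "cs @ [u]"] by simp
  moreover have "hd (as @ v # cs @ [u]) = last (as @ v # cs @ [u])"
    using hl p by (cases as) auto
  ultimately have c2: "cw B (as @ v # cs @ [u])" unfolding cw_def by simp
  have c1: "cw B (v # bs @ [v])" using i1 unfolding cw_def by simp
  have "pv B p = pv B (as @ [v]) \<otimes> (pv B (v # bs @ [v]) \<otimes> pv B (v # cs @ [u]))"
  proof -
    have a: "pv B p = pv B (as @ [v]) \<otimes> pv B (v # bs @ v # cs @ [u])"
      using pv_app[of B as v "bs @ v # cs @ [u]"] p2 by simp
    have b: "pv B (v # bs @ v # cs @ [u]) = pv B (v # bs @ [v]) \<otimes> pv B (v # cs @ [u])"
      using pv_app[of B "v # bs" v "cs @ [u]"] by simp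
    show ?thesis using a b by simp
  qed
  moreover have "pv B (as @ v # cs @ [u]) = pv B (as @ [v]) \<otimes> pv B (v # cs @ [u])"
    using pv_app[of B as v "cs @ [u]"] by simp
  ultimately show ?thesis using c1 c2 by blast
qed

lemma walk_split_chord:
  assumes p: "p = as @ [v] @ bs @ [w] @ cs" and cc: "cw B p" and e: "ed B v w"
    and l: "2 \<le> length as + length cs"
  shows "cw B (v # bs @ [w, v]) \<and> cw B (as @ [v, w] @ cs) \<and>
    pv B (v # bs @ [w, v]) \<otimes> pv B (as @ [v, w] @ cs) = pv B p"
proof -
  have iw: "isw B p" and hl: "hd p = last p" using cc unfolding cw_def by auto
  have p3: "p = as @ v # (bs @ w # cs)" using p by simp
  have i1: "isw B (as @ [v])" "isw B (v # bs @ [w])" "isw B (w # cs)"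
  proof -
    have a: "isw B (as @ [v]) \<and> isw B (v # bs @ w # cs)"
      using iw isw_app[of B as v "bs @ w # cs"] p3 by simp
    have b: "isw B (v # bs @ w # cs) = (isw B (v # bs @ [w]) \<and> isw B (w # cs))"
      using isw_app[of B "v # bs" w cs] by simp
    show "isw B (as @ [v])" "isw B (v # bs @ [w])" "isw B (w # cs)" using a b by auto
  qed
  have "isw B (v # bs @ [w, v])" using isw_app[of B "v # bs" w "[v]"] i1 e ed_sym by simp
  then have c1: "cw B (v # bs @ [w, v])" unfolding cw_def by simp
  have "isw B (as @ v # (w # cs))" using isw_app[of B as v "w # cs"] i1 e by simp
  moreover have "hd (as @ [v, w] @ cs) = last (as @ [v, w] @ cs)"
    using hl p l by (cases as; cases cs rule: rev_cases) auto
  ultimately have c2: "cw B (as @ [v, w] @ cs)" unfolding cw_def by simp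
  have pp: "pv B p = pv B (as @ [v]) \<otimes> (pv B (v # bs @ [w]) \<otimes> pv B (w # cs))"
  proof -
    have a: "pv B p = pv B (as @ [v]) \<otimes> pv B (v # bs @ w # cs)"
      using pv_app[of B as v "bs @ w # cs"] p3 by simp
    have b: "pv B (v # bs @ w # cs) = pv B (v # bs @ [w]) \<otimes> pv B (w # cs)"
      using pv_app[of B "v # bs" w cs] by simp
    show ?thesis using a b by simp
  qed
  have p1: "pv B (v # bs @ [w, v]) = pv B (v # bs @ [w]) \<otimes> wt B w v"
    using pv_app[of B "v # bs" w "[v]"] by simp
  have p2': "pv B (as @ [v, w] @ cs) = pv B (as @ [v]) \<otimes> (wt B v w \<otimes> pv B (w # cs))"
    using pv_app[of B as v "w # cs"] by simp
  have "pv B (v # bs @ [w, v]) \<otimes> pv B (as @ [v, w] @ cs) =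
     (pv B (as @ [v]) \<otimes> (pv B (v # bs @ [w]) \<otimes> pv B (w # cs))) \<otimes> (wt B v w \<otimes> wt B w v)"
    unfolding p1 p2' by (simp add: m_ac)
  also have "\<dots> = pv B p" using wt_inv[OF e] pp by simp
  finally show ?thesis using c1 c2 by blast
qed

end

context core begin

lemma walk_small:
  assumes B: "B \<in> BB" and cc: "cw B p" and dp: "distinct (butlast p)" and l: "length p \<le> 5"
  shows "pv B p = \<one>"
proof -
  have iw: "isw B p" and ne: "p \<noteq> []" and hl: "hd p = last p" using cc unfolding cw_def by auto
  consider "length p = 1" | "length p = 2" | "length p = 3" | "length p = 4" | "length p = 5"
  proof -
    have "0 < length p" using ne by simp
    then have "length p = 1 \<or> length p = 2 \<or> length p = 3 \<or> length p = 4 \<or> length p = 5" using l by presburger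
    then show "(length p = 1 \<Longrightarrow> thesis) \<Longrightarrow> (length p = 2 \<Longrightarrow> thesis) \<Longrightarrow> (length p = 3 \<Longrightarrow> thesis) \<Longrightarrow>
      (length p = 4 \<Longrightarrow> thesis) \<Longrightarrow> (length p = 5 \<Longrightarrow> thesis) \<Longrightarrow> thesis" by blast
  qed
  then show ?thesis
  proof cases
    case 1 then obtain u where "p = [u]" by (auto simp: length_Suc_conv)
    then show ?thesis by simp
  next
    case 2 then obtain u w where p: "p = [u, w]" by (auto simp: length_Suc_conv numeral_eq_Suc)
    then have "ed B u u" using iw hl by simp
    then show ?thesis using ed_irr by blast
  next
    case 3 then obtain u w z where p: "p = [u, w, z]" by (auto simp: length_Suc_conv numeral_eq_Suc)
    then have "z = u" "ed B u w" using iw hl by auto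
    then show ?thesis using p wt_inv by simp
  next
    case 4 then obtain u a b z where p: "p = [u, a, b, z]"
      by (auto simp: length_Suc_conv numeral_eq_Suc)
    then have "z = u" "ed B u a" "ed B a b" "ed B b u" using iw hl by auto
    then show ?thesis using ed_irr by blast
  next
    case 5 then obtain u a b c z where p: "p = [u, a, b, c, z]"
      by (auto simp: length_Suc_conv numeral_eq_Suc)
    then have e: "z = u" "ed B u a" "ed B a b" "ed B b c" "ed B c u" using iw hl by auto
    have ds: "distinct [u,a,b,c]" using dp p by simp
    show ?thesis
    proof (cases "u \<in> B")
      case True
      have m: "a \<notin> B" "b \<in> B" "c \<notin> B" using e True ed_irr by blast+
      have R: "f (insert a (B - {u})) = (f (insert a (B - {b})) \<otimes> f (insert c (B - {u}))) \<otimes> inv (f (insert c (B - {b})))"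
        using cyc4[OF B True m(2) _ m(1) m(3) _ e(2) _ _ _] e ds ed_sym by auto
      have w: "wt B u a = f (insert a (B - {u})) \<otimes> inv (f B)" "wt B a b = f B \<otimes> inv (f (insert a (B - {b})))"
        "wt B b c = f (insert c (B - {b})) \<otimes> inv (f B)" "wt B c u = f B \<otimes> inv (f (insert c (B - {u})))"
        using True m unfolding wt_def by auto
      have "pv B p = wt B u a \<otimes> (wt B a b \<otimes> (wt B b c \<otimes> (wt B c u \<otimes> \<one>)))" using p e(1) by (simp del: r_one)
      also have "\<dots> = \<one>" unfolding w R by (rule g4[OF fc fc fc fc])
      finally show ?thesis .
    next
      case False
      have m: "a \<in> B" "b \<notin> B" "c \<in> B" using e False ed_irr by blast+
      have R: "f (insert u (B - {a})) = (f (insert u (B - {c})) \<otimes> f (insert b (B - {a}))) \<otimes> inv (f (insert b (B - {c})))"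
        using cyc4[OF B m(1) m(3) _ False m(2) _ _ _ _ e(3)] e ds ed_sym by auto
      have w: "wt B u a = f B \<otimes> inv (f (insert u (B - {a})))" "wt B a b = f (insert b (B - {a})) \<otimes> inv (f B)"
        "wt B b c = f B \<otimes> inv (f (insert b (B - {c})))" "wt B c u = f (insert u (B - {c})) \<otimes> inv (f B)"
        using False m unfolding wt_def by auto
      have "pv B p = wt B u a \<otimes> (wt B a b \<otimes> (wt B b c \<otimes> (wt B c u \<otimes> \<one>)))" using p e(1) by (simp del: r_one)
      also have "\<dots> = \<one>" unfolding w R by (rule g4'[OF fc fc fc fc])
      finally show ?thesis .
    qed
  qed
qed

end

context core begin

lemma walk: "B \<in> BB \<Longrightarrow> cw B p \<Longrightarrow> pv B p = \<one>"
proof (induction "length p" arbitrary: B p rule: less_induct)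
  case less
  note IH = less.hyps
  have B: "B \<in> BB" and cc: "cw B p" using less.prems by auto
  have iw: "isw B p" and ne: "p \<noteq> []" and hl: "hd p = last p" using cc unfolding cw_def by auto
  show ?case
  proof (cases "distinct (butlast p)")
    case False
    obtain as v bs cs where "butlast p = as @ [v] @ bs @ [v] @ cs" using not_distinct_decomp[OF False] by blast
    then have p: "p = as @ [v] @ bs @ [v] @ cs @ [last p]" using append_butlast_last_id[OF ne] by (metis append.assoc)
    note S = walk_split_rep[OF p cc]
    have l1: "length (v # bs @ [v]) < length p" and l2: "length (as @ v # cs @ [last p]) < length p"
      by (subst p, simp)+
    have "pv B (v # bs @ [v]) = \<one>" using IH[OF l1 B] S by blast
    moreover have "pv B (as @ v # cs @ [last p]) = \<one>" using IH[OF l2 B] S by blast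
    ultimately show ?thesis using S by simp
  next
    case dp: True
    show ?thesis
    proof (cases "\<exists>as v bs w cs. p = as @ [v] @ bs @ [w] @ cs \<and> ed B v w \<and> bs \<noteq> [] \<and> 2 \<le> length as + length cs")
      case True
      then obtain as v bs w cs where p: "p = as @ [v] @ bs @ [w] @ cs" and e: "ed B v w"
        and bs: "bs \<noteq> []" and l: "2 \<le> length as + length cs" by blast
      note S = walk_split_chord[OF p cc e l]
      have l1: "length (v # bs @ [w, v]) < length p" using p l by simp
      have l2: "length (as @ [v, w] @ cs) < length p" using p bs by simp
      have "pv B (v # bs @ [w, v]) = \<one>" using IH[OF l1 B] S by blast
      moreover have "pv B (as @ [v, w] @ cs) = \<one>" using IH[OF l2 B] S by blast
      ultimately show ?thesis using S by simp
    next
      case False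
      then have nc: "\<And>as v bs w cs. p = as @ [v] @ bs @ [w] @ cs \<Longrightarrow> bs \<noteq> [] \<Longrightarrow>
          2 \<le> length as + length cs \<Longrightarrow> \<not> ed B v w" by blast
      show ?thesis
      proof (cases "length p \<le> 5")
        case True then show ?thesis using walk_small[OF B cc dp] by blast
      next
        case False
        show ?thesis
        proof (cases "hd p \<in> B")
          case True
          obtain x1 y1 x2 rest where p0: "p = x1 # y1 # x2 # rest" using False
            by (cases p; cases "tl p"; cases "tl (tl p)") auto
          have lr: "length rest \<ge> 3" using False p0 by simp
          define q where "q = butlast (butlast rest)"
          define yk where "yk = last (butlast rest)"
          have x1l: "last rest = x1" using hl p0 lr by (cases rest) auto
          have lb: "length (butlast rest) \<ge> 2" using lr by simp
          have rne2: "butlast rest \<noteq> []"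
          proof
            assume "butlast rest = []"
            then have "length (butlast rest) = 0" by (simp only: list.size)
            then show False using lb by linarith
          qed
          have rne: "rest \<noteq> []" "butlast rest \<noteq> []" using lr rne2 by auto
          have r1: "rest = butlast rest @ [last rest]" using rne by simp
          have r2: "butlast rest = q @ [yk]" unfolding q_def yk_def using rne by simp
          have rest: "rest = q @ [yk, x1]" using r1 r2 x1l by simp
          have qn: "q \<noteq> []" using lr rest by auto
          have p: "p = x1 # y1 # x2 # q @ [yk, x1]" using p0 rest by simp
          have x1: "x1 \<in> B" using True p by simp
          have pe: "p = (x1 # y1 # x2 # q) @ yk # [x1]" using p by simp
          have i1: "isw B (x1 # y1 # x2 # q @ [yk])" "isw B [yk, x1]"
            using iw isw_app[of B "x1 # y1 # x2 # q" yk "[x1]"] p by auto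
          have e1: "ed B x1 y1" and e2: "ed B y1 x2" and iwm: "isw B (x2 # q @ [yk])" using i1 by auto
          have e3: "ed B yk x1" using i1 by simp
          have ds: "distinct (x1 # y1 # x2 # q @ [yk])" using dp p
            by (metis append.assoc append_Cons append_Nil butlast_snoc)
          have n1: "\<not> ed B x2 yk" using nc[of "[x1,y1]" x2 q yk "[x1]"] p qn by simp
          have n2: "\<forall>z\<in>set q. \<not> ed B x1 z \<and> \<not> ed B z y1"
          proof
            fix z assume "z \<in> set q"
            then obtain q1 q2 where qq: "q = q1 @ z # q2" using split_list by metis
            have a: "\<not> ed B x1 z" using nc[of "[]" x1 "y1 # x2 # q1" z "q2 @ [yk, x1]"] p qq by simp
            have b: "\<not> ed B y1 z" using nc[of "[x1]" y1 "x2 # q1" z "q2 @ [yk, x1]"] p qq by simp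
            show "\<not> ed B x1 z \<and> \<not> ed B z y1" using a b ed_sym by blast
          qed
          note P = pivot[OF B x1 e1 e2 e3 iwm qn ds n1 n2]
          let ?B1 = "insert y1 (B - {x1})"
          let ?p' = "x2 # q @ [yk, x2]"
          have pe': "?p' = (x2 # q) @ yk # [x2]" by simp
          have "isw ?B1 ?p'" using isw_app[of ?B1 "x2 # q" yk "[x2]"] P by simp
          then have cw': "cw ?B1 ?p'" unfolding cw_def by simp
          have lp: "length ?p' < length p" using p by simp
          have "pv ?B1 ?p' = \<one>" using IH[OF lp _ cw'] P by blast
          moreover have "pv ?B1 ?p' = pv ?B1 (x2 # q @ [yk]) \<otimes> wt ?B1 yk x2"
            using pv_app[of ?B1 "x2 # q" yk "[x2]"] by simp
          moreover have "pv B p = wt B x1 y1 \<otimes> (wt B y1 x2 \<otimes> (pv B (x2 # q @ [yk]) \<otimes> wt B yk x1))"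
            unfolding p using pv_app[of B "x2 # q" yk "[x1]"] by simp
          ultimately show ?thesis using P by (simp add: m_ac)
        next
          case False
          obtain yk x1 y1 x2 rest where p0: "p = yk # x1 # y1 # x2 # rest" using \<open>\<not> length p \<le> 5\<close>
            by (cases p; cases "tl p"; cases "tl (tl p)"; cases "tl (tl (tl p))") auto
          have lr: "length rest \<ge> 2" using \<open>\<not> length p \<le> 5\<close> p0 by simp
          define q where "q = butlast rest"
          have ykl: "last rest = yk" using hl p0 lr by (cases rest) auto
          have rne: "rest \<noteq> []" using lr by auto
          have rest: "rest = q @ [yk]" unfolding q_def using rne ykl append_butlast_last_id[OF rne] by simp
          have qn: "q \<noteq> []" using lr rest by auto
          have p: "p = yk # x1 # y1 # x2 # q @ [yk]" using p0 rest by simp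
          have yk: "yk \<notin> B" using False p by simp
          have e3: "ed B yk x1" and e1: "ed B x1 y1" and e2: "ed B y1 x2" and iwm: "isw B (x2 # q @ [yk])"
            using iw p by auto
          have x1: "x1 \<in> B" using e3 yk ed_irr by blast
          have ds: "distinct (x1 # y1 # x2 # q @ [yk])" using dp p
            by (auto simp: butlast_append)
          have n1: "\<not> ed B x2 yk" using nc[of "[]" yk "[x1,y1]" x2 "q @ [yk]"] p qn ed_sym by (cases q) auto
          have n2: "\<forall>z\<in>set q. \<not> ed B x1 z \<and> \<not> ed B z y1"
          proof
            fix z assume "z \<in> set q"
            then obtain q1 q2 where qq: "q = q1 @ z # q2" using split_list by metis
            have a: "\<not> ed B x1 z" using nc[of "[yk]" x1 "y1 # x2 # q1" z "q2 @ [yk]"] p qq by simp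
            have b: "\<not> ed B y1 z" using nc[of "[yk, x1]" y1 "x2 # q1" z "q2 @ [yk]"] p qq by simp
            show "\<not> ed B x1 z \<and> \<not> ed B z y1" using a b ed_sym by blast
          qed
          note P = pivot[OF B x1 e1 e2 e3 iwm qn ds n1 n2]
          let ?B1 = "insert y1 (B - {x1})"
          let ?p' = "yk # x2 # q @ [yk]"
          have "isw ?B1 ?p'" using P by simp
          then have cw': "cw ?B1 ?p'" unfolding cw_def by simp
          have lp: "length ?p' < length p" using p by simp
          have "pv ?B1 ?p' = \<one>" using IH[OF lp _ cw'] P by blast
          moreover have "pv ?B1 ?p' = wt ?B1 yk x2 \<otimes> pv ?B1 (x2 # q @ [yk])" by simp
          moreover have "pv B p = wt B yk x1 \<otimes> (wt B x1 y1 \<otimes> (wt B y1 x2 \<otimes> pv B (x2 # q @ [yk])))"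
            unfolding p by simp
          ultimately show ?thesis using P by (simp add: m_ac)
        qed
      qed
    qed
  qed
qed

end

context comm_group begin
lemma gfin: assumes c: "a \<in> carrier G" "Q \<in> carrier G" "F \<in> carrier G" "F0 \<in> carrier G"
  and b: "b = a \<otimes> (F \<otimes> inv F0)"
  shows "F = (F0 \<otimes> inv (a \<otimes> Q)) \<otimes> (b \<otimes> Q)"
proof -
  have s1: "b \<otimes> Q = (a \<otimes> Q) \<otimes> (F \<otimes> inv F0)" unfolding b using c by (simp add: m_ac)
  have s2: "(F0 \<otimes> inv (a \<otimes> Q)) \<otimes> ((a \<otimes> Q) \<otimes> (F \<otimes> inv F0)) = F0 \<otimes> (F \<otimes> inv F0)"
  proof -
    have "(F0 \<otimes> inv (a \<otimes> Q)) \<otimes> ((a \<otimes> Q) \<otimes> (F \<otimes> inv F0)) = F0 \<otimes> (inv (a \<otimes> Q) \<otimes> ((a \<otimes> Q) \<otimes> (F \<otimes> inv F0)))"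
      using c by (intro m_assoc) auto
    also have "\<dots> = F0 \<otimes> (F \<otimes> inv F0)" using c by (subst gcan2) auto
    finally show ?thesis .
  qed
  have s3: "F0 \<otimes> (F \<otimes> inv F0) = F"
    using c by (simp only: m_lcomm[OF c(4) c(3) inv_closed[OF c(4)]] r_inv[OF c(4)] r_one[OF c(3)])
  show ?thesis unfolding s1 s2 s3 ..
qed
lemma gpot: "a \<in> carrier G \<Longrightarrow> w \<in> carrier G \<Longrightarrow> b \<in> carrier G \<Longrightarrow> a \<otimes> (w \<otimes> inv b) = \<one> \<Longrightarrow> b = a \<otimes> w"
proof -
  assume c: "a \<in> carrier G" "w \<in> carrier G" "b \<in> carrier G" and h: "a \<otimes> (w \<otimes> inv b) = \<one>"
  have "(a \<otimes> w) \<otimes> inv b = \<one>" using h c by (simp only: m_assoc m_closed inv_closed)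
  then show "b = a \<otimes> w" using c gn8[of "a \<otimes> w" b] by simp
qed
end

context core begin

definition rch :: "'e set \<Rightarrow> 'e \<Rightarrow> 'e \<Rightarrow> bool" where
  "rch B u w \<longleftrightarrow> (\<exists>p. isw B p \<and> p \<noteq> [] \<and> hd p = u \<and> last p = w)"

lemma rch_refl: "rch B u u" unfolding rch_def by (rule exI[of _ "[u]"]) simp

lemma rch_sym: "rch B u w \<Longrightarrow> rch B w u"
  unfolding rch_def using isw_rev by (metis Nil_is_rev_conv hd_rev last_rev)

lemma rch_trans: assumes "rch B u w" "rch B w z" shows "rch B u z"
proof -
  obtain p where p: "isw B p" "p \<noteq> []" "hd p = u" "last p = w" using assms(1) unfolding rch_def by blast
  obtain q where q: "isw B q" "q \<noteq> []" "hd q = w" "last q = z" using assms(2) unfolding rch_def by blast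
  have pe: "p = butlast p @ [w]" using p by (metis append_butlast_last_id)
  have qe: "q = w # tl q" using q by (cases q) auto
  have "isw B (butlast p @ w # tl q)" using isw_app[of B "butlast p" w "tl q"] p q pe qe by simp
  moreover have "hd (butlast p @ w # tl q) = u" using p pe by (cases "butlast p") auto
  moreover have "last (butlast p @ w # tl q) = z" using q qe by (metis last_appendR list.simps(3))
  ultimately show ?thesis unfolding rch_def by blast
qed

lemma rch_edge: "ed B u w \<Longrightarrow> rch B u w" unfolding rch_def by (rule exI[of _ "[u, w]"]) simp

definition rt :: "'e set \<Rightarrow> 'e \<Rightarrow> 'e" where "rt B u = (SOME r. rch B u r)"
definition pth :: "'e set \<Rightarrow> 'e \<Rightarrow> 'e list" where
  "pth B u = (SOME p. isw B p \<and> p \<noteq> [] \<and> hd p = rt B u \<and> last p = u)"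
definition pot :: "'e set \<Rightarrow> 'e \<Rightarrow> 'a" where "pot B u = pv B (pth B u)"

lemma pth_ok: "isw B (pth B u) \<and> pth B u \<noteq> [] \<and> hd (pth B u) = rt B u \<and> last (pth B u) = u"
proof -
  have "rch B u (rt B u)" unfolding rt_def using rch_refl by (metis someI)
  then have "rch B (rt B u) u" by (rule rch_sym)
  then show ?thesis unfolding pth_def rch_def by (rule someI_ex)
qed

lemma pot_c: "pot B u \<in> carrier G" unfolding pot_def by simp

lemma pot_edge: assumes B: "B \<in> BB" and e: "ed B x y" shows "pot B y = pot B x \<otimes> wt B x y"
proof -
  have "\<And>r. rch B x r \<longleftrightarrow> rch B y r" using rch_edge[OF e] rch_sym rch_trans by blast
  then have "(\<lambda>r. rch B x r) = (\<lambda>r. rch B y r)" by auto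
  then have rr: "rt B x = rt B y" unfolding rt_def by simp
  let ?px = "pth B x" and ?py = "pth B y"
  have px: "isw B ?px" "?px \<noteq> []" "hd ?px = rt B x" "last ?px = x" using pth_ok by blast+
  have py: "isw B ?py" "?py \<noteq> []" "hd ?py = rt B x" "last ?py = y" using pth_ok rr by metis+
  have pxe: "?px = butlast ?px @ [x]" using px by (metis append_butlast_last_id)
  have rpy: "rev ?py = y # rev (butlast ?py)" using py by (metis append_butlast_last_id rev.simps(2) rev_rev_ident rev_singleton_conv rev_append)
  have irp: "isw B (rev ?py)" using isw_rev py by blast
  let ?c = "butlast ?px @ x # y # rev (butlast ?py)"
  have ipx: "isw B (butlast ?px @ [x])" using px(1) pxe by metis
  have pvx: "pv B (butlast ?px @ [x]) = pot B x" unfolding pot_def using pxe by metis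
  have pvy: "pv B (y # rev (butlast ?py)) = inv (pot B y)" unfolding pot_def using pv_rev[OF py(1)] rpy by simp
  have irp': "isw B (y # rev (butlast ?py))" using irp rpy by simp
  have "isw B ?c" using isw_app[of B "butlast ?px" x "y # rev (butlast ?py)"] ipx irp' e by simp
  moreover have "hd ?c = rt B x"
  proof (cases "butlast ?px")
    case Nil
    then have "?px = [x]" using pxe by simp
    then show ?thesis using px Nil by simp
  next
    case (Cons a l)
    then have "hd ?px = a" using pxe by (metis append_Cons list.sel(1))
    then show ?thesis using px Cons by simp
  qed
  moreover have "last ?c = rt B x"
  proof -
    have "last ?c = last (rev ?py)" by (subst rpy) simp
    also have "\<dots> = hd ?py" using py by (simp add: last_rev)
    finally show ?thesis using py by simp
  qed
  ultimately have cwc: "cw B ?c" unfolding cw_def by simp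
  have "pv B ?c = pv B (butlast ?px @ [x]) \<otimes> pv B (x # y # rev (butlast ?py))"
    using pv_app[of B "butlast ?px" x "y # rev (butlast ?py)"] by simp
  also have "\<dots> = pot B x \<otimes> (wt B x y \<otimes> inv (pot B y))"
    using pvx pvy by simp
  finally have "pot B x \<otimes> (wt B x y \<otimes> inv (pot B y)) = \<one>" using walk[OF B cwc] by simp
  then show ?thesis by (rule gpot[OF pot_c wt_c pot_c])
qed

theorem core_main: "\<exists>c d. c \<in> carrier G \<and> d \<in> E \<rightarrow> carrier G \<and> (\<forall>B\<in>BB. f B = c \<otimes> finprod G d B)"
proof -
  obtain B0 where B0: "B0 \<in> BB" using bne by blast
  define d where "d = pot B0"
  define c where "c = f B0 \<otimes> inv (finprod G d B0)"
  have dc: "d \<in> E \<rightarrow> carrier G" unfolding d_def using pot_c by auto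
  have dc': "\<And>A. finprod G d A \<in> carrier G" using pot_c unfolding d_def by (auto intro: finprod_closed)
  have cc: "c \<in> carrier G" unfolding c_def using fc dc' by simp
  have fin0: "finite B0" using bfin[OF B0] .
  have H: "f B = c \<otimes> finprod G d B" if B: "B \<in> BB" and k: "card (B - B0) \<le> 1" for B
  proof -
    have finB: "finite B" using bfin[OF B] .
    have ceq: "card (B - B0) = card (B0 - B)"
    proof -
      have "card (B - B0) = card B - card (B \<inter> B0)" using finB by (simp add: card_Diff_subset_Int)
      moreover have "card (B0 - B) = card B0 - card (B0 \<inter> B)" using fin0 by (simp add: card_Diff_subset_Int)
      ultimately show ?thesis using bcard[OF B] bcard[OF B0] by (simp add: Int_commute)
    qed
    show ?thesis
    proof (cases "card (B - B0) = 0")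
      case True
      then have "B - B0 = {}" using finB by simp
      then have "B \<subseteq> B0" by blast
      then have "B = B0" using card_subset_eq[OF fin0 \<open>B \<subseteq> B0\<close>] bcard[OF B] bcard[OF B0] by simp
      then show ?thesis unfolding c_def using fc dc' by (simp add: m_assoc)
    next
      case False
      then have "card (B - B0) = 1" using k by simp
      then obtain y where y: "B - B0 = {y}" by (auto simp: card_1_singleton_iff)
      have "card (B0 - B) = 1" using ceq \<open>card (B - B0) = 1\<close> by simp
      then obtain x where x: "B0 - B = {x}" by (metis card_1_singleton_iff One_nat_def)
      have Be: "B = insert y (B0 - {x})" using x y by auto
      have xE: "x \<in> B0" "y \<notin> B0" using x y by auto
      have e: "ed B0 x y" using xE B Be unfolding ed_def by auto
      have pe: "d y = d x \<otimes> (f B \<otimes> inv (f B0))" unfolding d_def using pot_edge[OF B0 e] xE Be unfolding wt_def by simp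
      have inE: "x \<in> E" "y \<in> E" using xE bE[OF B0] bE[OF B] y by auto
      have fp00: "finprod G d (insert x (B0 - {x})) = d x \<otimes> finprod G d (B0 - {x})"
        by (rule finprod_insert) (use fin0 xE dc inE bE[OF B0] in auto)
      have fp0: "finprod G d B0 = d x \<otimes> finprod G d (B0 - {x})"
        using fp00 by (simp only: insert_Diff[OF xE(1)])
      have fpB: "finprod G d B = d y \<otimes> finprod G d (B0 - {x})"
        unfolding Be by (rule finprod_insert) (use fin0 xE dc inE bE[OF B0] in auto)
      have dx: "d x \<in> carrier G" using dc inE by auto
      show ?thesis unfolding c_def fp0 fpB by (rule gfin[OF dx dc' fc fc pe])
    qed
  qed
  have "\<forall>B\<in>BB. f B = c \<otimes> finprod G d B" using stepA[OF B0 cc dc H] by blast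
  then show ?thesis using cc dc by blast
qed

end

locale past =
  fixes pm :: "'p \<Rightarrow> 'p \<Rightarrow> 'p" and one zero :: 'p and N :: "('p \<times> 'p \<times> 'p) set"
  assumes P: "pasture pm one zero N"
begin

lemma assoc: "pm (pm a b) c = pm a (pm b c)" using P[unfolded pasture_def, THEN conjunct1] by blast
lemma comm: "pm a b = pm b a" using P[unfolded pasture_def, THEN conjunct2, THEN conjunct1] by blast
lemma lone: "pm one a = a" using P[unfolded pasture_def, THEN conjunct2, THEN conjunct2, THEN conjunct1] by blast
lemma lzero: "pm zero a = zero" using P[unfolded pasture_def, THEN conjunct2, THEN conjunct2, THEN conjunct2, THEN conjunct1] by blast
lemma onz: "one \<noteq> zero" using P[unfolded pasture_def, THEN conjunct2, THEN conjunct2, THEN conjunct2, THEN conjunct2, THEN conjunct1] by simp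
lemma nzd: "a \<noteq> zero \<Longrightarrow> b \<noteq> zero \<Longrightarrow> pm a b \<noteq> zero" using P[unfolded pasture_def, THEN conjunct2, THEN conjunct2, THEN conjunct2, THEN conjunct2, THEN conjunct2, THEN conjunct1] by blast
lemma invex: "a \<noteq> zero \<Longrightarrow> \<exists>b. b \<noteq> zero \<and> pm a b = one" using P[unfolded pasture_def, THEN conjunct2, THEN conjunct2, THEN conjunct2, THEN conjunct2, THEN conjunct2, THEN conjunct2, THEN conjunct1] by blast
lemma perm: "(a,b,c) \<in> N \<Longrightarrow> (b,a,c) \<in> N \<and> (b,c,a) \<in> N" using P[unfolded pasture_def, THEN conjunct2, THEN conjunct2, THEN conjunct2, THEN conjunct2, THEN conjunct2, THEN conjunct2, THEN conjunct2, THEN conjunct1] by blast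
lemma zz: "(a,zero,zero) \<in> N \<longleftrightarrow> a = zero" using P[unfolded pasture_def, THEN conjunct2, THEN conjunct2, THEN conjunct2, THEN conjunct2, THEN conjunct2, THEN conjunct2, THEN conjunct2, THEN conjunct2, THEN conjunct1] by blast
lemma mulN: "(a,b,c) \<in> N \<Longrightarrow> (pm d a, pm d b, pm d c) \<in> N" using P[unfolded pasture_def, THEN conjunct2, THEN conjunct2, THEN conjunct2, THEN conjunct2, THEN conjunct2, THEN conjunct2, THEN conjunct2, THEN conjunct2, THEN conjunct2, THEN conjunct1] by blast
lemma ueps: "\<exists>!e. (one,e,zero) \<in> N" using P[unfolded pasture_def, THEN conjunct2, THEN conjunct2, THEN conjunct2, THEN conjunct2, THEN conjunct2, THEN conjunct2, THEN conjunct2, THEN conjunct2, THEN conjunct2, THEN conjunct2] by simp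

definition G0 :: "'p monoid" where "G0 = \<lparr>carrier = {a. a \<noteq> zero}, mult = pm, one = one\<rparr>"
lemma G0s: "carrier G0 = {a. a \<noteq> zero}" "mult G0 = pm" "monoid.one G0 = one" unfolding G0_def by auto

lemma cg: "comm_group G0"
proof (rule comm_groupI)
  show "\<And>x y. x \<in> carrier G0 \<Longrightarrow> y \<in> carrier G0 \<Longrightarrow> x \<otimes>\<^bsub>G0\<^esub> y \<in> carrier G0" using nzd by (simp add: G0s)
  show "\<one>\<^bsub>G0\<^esub> \<in> carrier G0" using onz by (simp add: G0s)
  show "\<And>x y z. x \<in> carrier G0 \<Longrightarrow> y \<in> carrier G0 \<Longrightarrow> z \<in> carrier G0 \<Longrightarrow>
    x \<otimes>\<^bsub>G0\<^esub> y \<otimes>\<^bsub>G0\<^esub> z = x \<otimes>\<^bsub>G0\<^esub> (y \<otimes>\<^bsub>G0\<^esub> z)" by (simp add: G0s assoc)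
  show "\<And>x y. x \<in> carrier G0 \<Longrightarrow> y \<in> carrier G0 \<Longrightarrow> x \<otimes>\<^bsub>G0\<^esub> y = y \<otimes>\<^bsub>G0\<^esub> x" by (simp add: G0s comm)
  show "\<And>x. x \<in> carrier G0 \<Longrightarrow> \<one>\<^bsub>G0\<^esub> \<otimes>\<^bsub>G0\<^esub> x = x" by (simp add: G0s lone)
  show "\<And>x. x \<in> carrier G0 \<Longrightarrow> \<exists>y\<in>carrier G0. y \<otimes>\<^bsub>G0\<^esub> x = \<one>\<^bsub>G0\<^esub>"
  proof -
    fix x assume "x \<in> carrier G0"
    then obtain b where b: "b \<noteq> zero" "pm x b = one" using invex by (auto simp: G0s)
    then show "\<exists>y\<in>carrier G0. y \<otimes>\<^bsub>G0\<^esub> x = \<one>\<^bsub>G0\<^esub>" using comm[of b x] by (auto simp: G0s)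
  qed
qed

end

sublocale past \<subseteq> G: comm_group G0 by (rule cg)

context past begin

abbreviation iv where "iv a \<equiv> inv\<^bsub>G0\<^esub> a"
definition eps where "eps = pepsilon one zero N"

lemma mG: "x \<otimes>\<^bsub>G0\<^esub> y = pm x y" by (simp add: G0s)
lemma cG: "x \<in> carrier G0 \<longleftrightarrow> x \<noteq> zero" by (simp add: G0s)
lemma oneG: "\<one>\<^bsub>G0\<^esub> = one" by (simp add: G0s)

lemma epsN: "(one, eps, zero) \<in> N" unfolding eps_def pepsilon_def using ueps by (rule theI')
lemma eps_u: "(one, e, zero) \<in> N \<Longrightarrow> e = eps" unfolding eps_def pepsilon_def
  by (rule the1_equality[OF ueps, symmetric])
lemma eps_nz: "eps \<noteq> zero"
proof
  assume "eps = zero"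
  then have "(one, zero, zero) \<in> N" using epsN by simp
  then have "one = zero" using zz[of one] by blast
  then show False using onz by blast
qed

lemma ivr: assumes "a \<noteq> zero" shows "pm a (iv a) = one"
proof -
  have c: "a \<in> carrier G0" using assms by (simp add: G0s)
  have "a \<otimes>\<^bsub>G0\<^esub> iv a = \<one>\<^bsub>G0\<^esub>" by (rule G.r_inv[OF c])
  then show ?thesis unfolding G0s(2,3) .
qed
lemma ivl: "a \<noteq> zero \<Longrightarrow> pm (iv a) a = one" using ivr[of a] comm[of "iv a" a] by simp
lemma ivnz: assumes "a \<noteq> zero" shows "iv a \<noteq> zero"
proof -
  have c: "a \<in> carrier G0" using assms by (simp add: G0s)
  have "iv a \<in> carrier G0" by (rule G.inv_closed[OF c])
  then show ?thesis unfolding G0s(1) by simp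
qed
lemma rone: "pm a one = a" using lone[of a] comm[of a one] by simp
lemma rzero: "pm a zero = zero" using lzero[of a] comm[of a zero] by simp

lemma eps2: "pm eps eps = one"
proof -
  have "(eps, one, zero) \<in> N" using epsN perm by blast
  then have "(pm (iv eps) eps, pm (iv eps) one, pm (iv eps) zero) \<in> N" by (rule mulN)
  then have "(one, iv eps, zero) \<in> N" by (simp add: ivl[OF eps_nz] rone rzero)
  then have "iv eps = eps" by (rule eps_u)
  then show ?thesis using ivr[OF eps_nz] by simp
qed

lemma uniq: assumes "(u, w, zero) \<in> N" "u \<noteq> zero" shows "w = pm eps u"
proof -
  have "(pm (iv u) u, pm (iv u) w, pm (iv u) zero) \<in> N" using assms(1) by (rule mulN)
  then have "(one, pm (iv u) w, zero) \<in> N" by (simp add: ivl[OF assms(2)] rzero)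
  then have e: "pm (iv u) w = eps" by (rule eps_u)
  have "w = pm u (pm (iv u) w)" by (simp add: assoc[symmetric] ivr[OF assms(2)] lone)
  then show ?thesis using e comm by simp
qed

lemma fundI: assumes "(z, z', eps) \<in> N" "z \<noteq> zero" "z' \<noteq> zero"
  shows "fundamental pm one zero N z" "fundamental pm one zero N z'"
proof -
  have e: "pm (pepsilon one zero N) one = eps" using rone unfolding eps_def by simp
  show "fundamental pm one zero N z" unfolding fundamental_def e using assms by blast
  have "(z', z, eps) \<in> N" using assms(1) perm by blast
  then show "fundamental pm one zero N z'" unfolding fundamental_def e using assms by blast
qed


lemma lcomm: "pm a (pm b c) = pm b (pm a c)" using assoc comm by metis

lemma eps_cancel: "pm eps x = pm eps y \<Longrightarrow> x = y"
proof -
  assume h: "pm eps x = pm eps y"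
  have "x = pm (pm eps eps) x" by (simp add: eps2 lone)
  also have "\<dots> = pm eps (pm eps y)" by (simp only: assoc h)
  also have "\<dots> = y" by (simp only: assoc[symmetric] eps2 lone)
  finally show ?thesis .
qed

lemma splitt: assumes "t \<noteq> zero" shows "u = pm t (pm (iv t) u)" by (simp only: assoc[symmetric] ivr[OF assms] lone)

lemma keyQ:
  assumes nz: "u \<noteq> zero" "w \<noteq> zero" "u' \<noteq> zero" "w' \<noteq> zero"
    and h1: "(u, pm eps w, t) \<in> N" and h2: "(u', pm eps w', t') \<in> N" and tt: "t = zero \<longleftrightarrow> t' = zero"
    and fu: "\<forall>z w. fundamental pm one zero N z \<and> fundamental pm one zero N w \<longrightarrow> z = w"
  shows "pm u' w = pm u w'"
proof (cases "t = zero")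
  case True
  then have t': "t' = zero" using tt by simp
  have "pm eps w = pm eps u" using uniq[OF _ nz(1)] h1 True by simp
  then have "w = u" by (rule eps_cancel)
  moreover have "pm eps w' = pm eps u'" using uniq[OF _ nz(3)] h2 t' by simp
  then have "w' = u'" by (rule eps_cancel)
  ultimately show ?thesis using comm by simp
next
  case False
  then have t': "t' \<noteq> zero" using tt by simp
  have gen: "fundamental pm one zero N (pm (pm eps (iv s)) x) \<and> fundamental pm one zero N (pm (iv s) y)"
    if hs: "(x, pm eps y, s) \<in> N" "s \<noteq> zero" "x \<noteq> zero" "y \<noteq> zero" for x y s
  proof -
    let ?k = "pm eps (iv s)"
    have "(pm ?k x, pm ?k (pm eps y), pm ?k s) \<in> N" using hs(1) by (rule mulN)
    moreover have "pm ?k s = eps" by (simp only: assoc ivl[OF hs(2)] rone)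
    moreover have "pm ?k (pm eps y) = pm (iv s) y"
    proof -
      have "pm ?k (pm eps y) = pm (pm eps eps) (pm (iv s) y)" by (simp only: assoc lcomm)
      then show ?thesis by (simp only: eps2 lone)
    qed
    ultimately have N3: "(pm ?k x, pm (iv s) y, eps) \<in> N" by simp
    have "pm ?k x \<noteq> zero" using nzd eps_nz ivnz hs by simp
    moreover have "pm (iv s) y \<noteq> zero" using nzd ivnz hs by simp
    ultimately show ?thesis using fundI[OF N3] by blast
  qed
  have F1: "fundamental pm one zero N (pm (pm eps (iv t)) u)" "fundamental pm one zero N (pm (iv t) w)"
    using gen[OF h1 False nz(1,2)] by blast+
  have F2: "fundamental pm one zero N (pm (pm eps (iv t')) u')" "fundamental pm one zero N (pm (iv t') w')"
    using gen[OF h2 t' nz(3,4)] by blast+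
  have "pm (pm eps (iv t)) u = pm (pm eps (iv t')) u'" using fu F1 F2 by blast
  then have "pm eps (pm (iv t) u) = pm eps (pm (iv t') u')" by (simp only: assoc)
  then have A: "pm (iv t) u = pm (iv t') u'" by (rule eps_cancel)
  have B: "pm (iv t) w = pm (iv t') w'" using fu F1 F2 by blast
  have "pm u' w = pm (pm t' (pm (iv t') u')) (pm t (pm (iv t) w))"
    using splitt[OF t', of u'] splitt[OF False, of w] by simp
  also have "\<dots> = pm (pm t' (pm (iv t) u)) (pm t (pm (iv t') w'))" unfolding A B ..
  also have "\<dots> = pm (pm t (pm (iv t) u)) (pm t' (pm (iv t') w'))" by (simp only: assoc lcomm comm)
  also have "\<dots> = pm u w'" using splitt[OF t', of w'] splitt[OF False, of u] by simp
  finally show ?thesis .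
qed

end

context past begin

lemma iv_eps: "iv eps = eps"
proof -
  have c: "eps \<in> carrier G0" using eps_nz by (simp add: G0s)
  have "eps \<otimes>\<^bsub>G0\<^esub> eps = \<one>\<^bsub>G0\<^esub>" using eps2 by (simp only: G0s(2,3))
  then show ?thesis using G.inv_equality[OF _ c c] by simp
qed

lemma ratio_eps: assumes "a \<noteq> zero" shows "pm (pm eps a') (iv (pm eps a)) = pm a' (iv a)"
proof -
  have c: "eps \<in> carrier G0" "a \<in> carrier G0" using eps_nz assms by (simp_all add: G0s)
  have "iv (eps \<otimes>\<^bsub>G0\<^esub> a) = iv eps \<otimes>\<^bsub>G0\<^esub> iv a" by (rule G.inv_mult[OF c])
  then have i: "iv (pm eps a) = pm eps (iv a)" unfolding iv_eps by (simp only: G0s(2))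
  have "pm (pm eps a') (pm eps (iv a)) = pm (pm eps eps) (pm a' (iv a))" by (simp only: assoc lcomm)
  then show ?thesis unfolding i eps2 lone .
qed

lemma foldr_fp: assumes "d \<in> E \<rightarrow> carrier G0"
  shows "distinct xs \<Longrightarrow> set xs \<subseteq> E \<Longrightarrow> foldr (\<lambda>x acc. pm (d x) acc) xs one = finprod G0 d (set xs)"
proof (induction xs)
  case Nil then show ?case by (simp add: G0s)
next
  case (Cons x xs)
  have "finprod G0 d (insert x (set xs)) = d x \<otimes>\<^bsub>G0\<^esub> finprod G0 d (set xs)"
    by (rule G.finprod_insert) (use Cons assms in auto)
  then show ?case using Cons by (simp add: G0s)
qed

theorem main:
  fixes E :: "'e set" and BB :: "'e set set" and \<Delta> \<Delta>' :: "'e list \<Rightarrow> 'p"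
  assumes fu: "\<forall>z w. fundamental pm one zero N z \<and> fundamental pm one zero N w \<longrightarrow> z = w"
    and mr: "matroid_rank E BB r"
    and D: "P_rep pm one zero N E BB r \<Delta>" and D': "P_rep pm one zero N E BB r \<Delta>'"
  shows "rescaling_equiv pm one zero E r \<Delta> \<Delta>'"
proof -
  have R1: "\<And>xs. xs \<in> tuples E r \<Longrightarrow> \<Delta> xs \<noteq> zero \<longleftrightarrow> set xs \<in> BB"
    "\<And>xs. xs \<in> tuples E r \<Longrightarrow> \<Delta>' xs \<noteq> zero \<longleftrightarrow> set xs \<in> BB"
    using D D' unfolding P_rep_def Let_def by blast+
  have R2: "\<And>xs \<sigma>. xs \<in> tuples E r \<Longrightarrow> \<sigma> permutes {..<r} \<Longrightarrow>
        \<Delta> (map (\<lambda>i. xs ! \<sigma> i) [0..<r]) = (if sign \<sigma> = 1 then \<Delta> xs else pm eps (\<Delta> xs))"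
    "\<And>xs \<sigma>. xs \<in> tuples E r \<Longrightarrow> \<sigma> permutes {..<r} \<Longrightarrow>
        \<Delta>' (map (\<lambda>i. xs ! \<sigma> i) [0..<r]) = (if sign \<sigma> = 1 then \<Delta>' xs else pm eps (\<Delta>' xs))"
    using D D' unfolding P_rep_def Let_def eps_def by blast+
  have R3: "\<And>J e1 e2 e3 e4. 2 \<le> r \<Longrightarrow> J \<in> tuples E (r - 2) \<Longrightarrow> e1 \<in> E \<Longrightarrow> e2 \<in> E \<Longrightarrow> e3 \<in> E \<Longrightarrow> e4 \<in> E \<Longrightarrow>
          (pm (\<Delta> (J @ [e1, e2])) (\<Delta> (J @ [e3, e4])),
           pm eps (pm (\<Delta> (J @ [e1, e3])) (\<Delta> (J @ [e2, e4]))),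
           pm (\<Delta> (J @ [e1, e4])) (\<Delta> (J @ [e2, e3]))) \<in> N"
    "\<And>J e1 e2 e3 e4. 2 \<le> r \<Longrightarrow> J \<in> tuples E (r - 2) \<Longrightarrow> e1 \<in> E \<Longrightarrow> e2 \<in> E \<Longrightarrow> e3 \<in> E \<Longrightarrow> e4 \<in> E \<Longrightarrow>
          (pm (\<Delta>' (J @ [e1, e2])) (\<Delta>' (J @ [e3, e4])),
           pm eps (pm (\<Delta>' (J @ [e1, e3])) (\<Delta>' (J @ [e2, e4]))),
           pm (\<Delta>' (J @ [e1, e4])) (\<Delta>' (J @ [e2, e3]))) \<in> N"
    using D D' unfolding P_rep_def Let_def eps_def by blast+
  have BE: "\<And>B. B \<in> BB \<Longrightarrow> B \<subseteq> E" "finite E" "\<And>B. B \<in> BB \<Longrightarrow> card B = r"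
    using mr unfolding matroid_rank_def matroid_def by blast+
  define lst where "lst S = (SOME xs. distinct xs \<and> set xs = S)" for S :: "'e set"
  have lst: "distinct (lst S) \<and> set (lst S) = S" if "finite S" for S
    unfolding lst_def using finite_distinct_list[OF that] by (metis (mono_tags, lifting) someI)
  define f where "f S = (if S \<in> BB then pm (\<Delta>' (lst S)) (iv (\<Delta> (lst S))) else one)" for S
  have tup: "xs \<in> tuples E r" if "distinct xs" "set xs \<in> BB" for xs
    using that BE distinct_card[OF that(1)] unfolding tuples_def by auto
  have fS: "f (set xs) = pm (\<Delta>' xs) (iv (\<Delta> xs))" if xs: "distinct xs" "set xs \<in> BB" for xs
  proof -
    let ?S = "set xs"
    have fin: "finite ?S" by simp
    have l: "distinct (lst ?S)" "set (lst ?S) = ?S" using lst[OF fin] by auto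
    have "mset (lst ?S) = mset xs" using l xs by (simp add: set_eq_iff_mset_eq_distinct)
    then obtain \<sigma> where s: "\<sigma> permutes {..<length xs}" "permute_list \<sigma> xs = lst ?S"
      by (metis mset_eq_permutation)
    have lx: "length xs = r" using BE(3)[OF xs(2)] distinct_card[OF xs(1)] by simp
    have tx: "xs \<in> tuples E r" using tup[OF xs] .
    have pl: "lst ?S = map (\<lambda>i. xs ! \<sigma> i) [0..<r]" using s(2) lx unfolding permute_list_def by simp
    have s': "\<sigma> permutes {..<r}" using s(1) lx by simp
    have nz: "\<Delta> xs \<noteq> zero" using R1(1)[OF tx] xs by simp
    have e1: "\<Delta> (lst ?S) = (if sign \<sigma> = 1 then \<Delta> xs else pm eps (\<Delta> xs))" using R2(1)[OF tx s'] pl by simp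
    have e2: "\<Delta>' (lst ?S) = (if sign \<sigma> = 1 then \<Delta>' xs else pm eps (\<Delta>' xs))" using R2(2)[OF tx s'] pl by simp
    show ?thesis unfolding f_def using xs e1 e2 ratio_eps[OF nz] by simp
  qed
  have fc: "f S \<in> carrier G0" for S
  proof (cases "S \<in> BB")
    case True
    have fin: "finite S" using BE True finite_subset by blast
    have l: "distinct (lst S)" "set (lst S) = S" using lst[OF fin] by auto
    have "\<Delta> (lst S) \<noteq> zero" "\<Delta>' (lst S) \<noteq> zero" using R1[OF tup[OF l(1)]] l True by auto
    then show ?thesis unfolding f_def using True nzd ivnz by (simp add: G0s)
  next
    case False then show ?thesis unfolding f_def using onz by (simp add: G0s)
  qed
  have pz: "pm x y = zero \<longleftrightarrow> x = zero \<or> y = zero" for x y using nzd lzero rzero by metis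
  have Qf: "f (J \<union> {a,b}) \<otimes>\<^bsub>G0\<^esub> f (J \<union> {c,d}) = f (J \<union> {a,c}) \<otimes>\<^bsub>G0\<^esub> f (J \<union> {b,d})"
    if nJ: "a \<notin> J" "b \<notin> J" "c \<notin> J" "d \<notin> J" and ds: "distinct [a,b,c,d]"
      and B1: "J \<union> {a,b} \<in> BB" and B2: "J \<union> {c,d} \<in> BB" and B3: "J \<union> {a,c} \<in> BB" and B4: "J \<union> {b,d} \<in> BB"
    for J a b c d
  proof -
    have JE: "J \<subseteq> E" using BE(1)[OF B1] by blast
    have finJ: "finite J" using JE BE(2) finite_subset by blast
    define js where "js = lst J"
    have js: "distinct js" "set js = J" using lst[OF finJ] js_def by auto
    have "card (J \<union> {a,b}) = card J + 2" using finJ nJ ds by simp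
    then have rJ: "r = card J + 2" using BE(3)[OF B1] by simp
    have r2: "2 \<le> r" using rJ by simp
    have ljs: "length js = card J" using distinct_card[OF js(1)] js(2) by simp
    have tJ: "js \<in> tuples E (r - 2)" unfolding tuples_def using js JE ljs rJ by simp
    have inE: "a \<in> E" "b \<in> E" "c \<in> E" "d \<in> E" using BE(1)[OF B1] BE(1)[OF B2] by auto
    have Lp: "distinct (js @ [x,y]) \<and> set (js @ [x,y]) = J \<union> {x,y} \<and> js @ [x,y] \<in> tuples E r"
      if "x \<notin> J" "y \<notin> J" "x \<noteq> y" "x \<in> E" "y \<in> E" for x y
      using that js JE ljs rJ unfolding tuples_def by auto
    note Lab = Lp[OF nJ(1,2) _ inE(1,2)] and Lcd = Lp[OF nJ(3,4) _ inE(3,4)]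
     and Lac = Lp[OF nJ(1,3) _ inE(1,3)] and Lbd = Lp[OF nJ(2,4) _ inE(2,4)]
     and Lad = Lp[OF nJ(1,4) _ inE(1,4)] and Lbc = Lp[OF nJ(2,3) _ inE(2,3)]
    have dd: "a \<noteq> b" "c \<noteq> d" "a \<noteq> c" "b \<noteq> d" "a \<noteq> d" "b \<noteq> c" using ds by auto
    have fv: "f (J \<union> {x,y}) = \<Delta>' (js @ [x,y]) \<otimes>\<^bsub>G0\<^esub> iv (\<Delta> (js @ [x,y]))"
      and nz: "\<Delta> (js @ [x,y]) \<noteq> zero" "\<Delta>' (js @ [x,y]) \<noteq> zero"
      if "x \<notin> J" "y \<notin> J" "x \<noteq> y" "x \<in> E" "y \<in> E" "J \<union> {x,y} \<in> BB" for x y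
    proof -
      have L: "distinct (js @ [x,y])" "set (js @ [x,y]) = J \<union> {x,y}" "js @ [x,y] \<in> tuples E r"
        using Lp[OF that(1-5)] by auto
      show "f (J \<union> {x,y}) = \<Delta>' (js @ [x,y]) \<otimes>\<^bsub>G0\<^esub> iv (\<Delta> (js @ [x,y]))"
        using fS[OF L(1)] L(2) that(6) by (simp add: mG)
      show "\<Delta> (js @ [x,y]) \<noteq> zero" "\<Delta>' (js @ [x,y]) \<noteq> zero" using R1[OF L(3)] L(2) that(6) by auto
    qed
    have zz: "\<Delta> (js @ [x,y]) = zero \<longleftrightarrow> \<Delta>' (js @ [x,y]) = zero"
      if "x \<notin> J" "y \<notin> J" "x \<noteq> y" "x \<in> E" "y \<in> E" for x y
      using R1[of "js @ [x,y]"] Lp[OF that] by blast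
    note T1 = R3(1)[OF r2 tJ inE] and T2 = R3(2)[OF r2 tJ inE]
    let ?A = "\<Delta> (js @ [a,b])" and ?C = "\<Delta> (js @ [c,d])" and ?X = "\<Delta> (js @ [a,c])" and ?Y = "\<Delta> (js @ [b,d])"
    let ?A' = "\<Delta>' (js @ [a,b])" and ?C' = "\<Delta>' (js @ [c,d])" and ?X' = "\<Delta>' (js @ [a,c])" and ?Y' = "\<Delta>' (js @ [b,d])"
    have n1: "?A \<noteq> zero" "?A' \<noteq> zero" using nz[OF nJ(1,2) dd(1) inE(1,2) B1] by auto
    have n2: "?C \<noteq> zero" "?C' \<noteq> zero" using nz[OF nJ(3,4) dd(2) inE(3,4) B2] by auto
    have n3: "?X \<noteq> zero" "?X' \<noteq> zero" using nz[OF nJ(1,3) dd(3) inE(1,3) B3] by auto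
    have n4: "?Y \<noteq> zero" "?Y' \<noteq> zero" using nz[OF nJ(2,4) dd(4) inE(2,4) B4] by auto
    have tt: "pm (\<Delta> (js @ [a,d])) (\<Delta> (js @ [b,c])) = zero \<longleftrightarrow> pm (\<Delta>' (js @ [a,d])) (\<Delta>' (js @ [b,c])) = zero"
      unfolding pz using zz[OF nJ(1,4) dd(5) inE(1,4)] zz[OF nJ(2,3) dd(6) inE(2,3)] by blast
    have K: "pm (pm ?A' ?C') (pm ?X ?Y) = pm (pm ?A ?C) (pm ?X' ?Y')"
      by (rule keyQ[OF _ _ _ _ T1 T2 tt fu]) (use n1 n2 n3 n4 nzd in auto)
    have cs: "?A \<in> carrier G0" "?A' \<in> carrier G0" "?C \<in> carrier G0" "?C' \<in> carrier G0"
      "?X \<in> carrier G0" "?X' \<in> carrier G0" "?Y \<in> carrier G0" "?Y' \<in> carrier G0"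
      using n1 n2 n3 n4 by (auto simp: G0s)
    have "f (J \<union> {a,b}) \<otimes>\<^bsub>G0\<^esub> f (J \<union> {c,d}) = (?A' \<otimes>\<^bsub>G0\<^esub> ?C') \<otimes>\<^bsub>G0\<^esub> iv (?A \<otimes>\<^bsub>G0\<^esub> ?C)"
      unfolding fv[OF nJ(1,2) dd(1) inE(1,2) B1] fv[OF nJ(3,4) dd(2) inE(3,4) B2] by (rule G.gm[OF cs(2) cs(1) cs(4) cs(3)])
    also have "\<dots> = (?X' \<otimes>\<^bsub>G0\<^esub> ?Y') \<otimes>\<^bsub>G0\<^esub> iv (?X \<otimes>\<^bsub>G0\<^esub> ?Y)"
    proof -
      have "(?A' \<otimes>\<^bsub>G0\<^esub> ?C') \<otimes>\<^bsub>G0\<^esub> (?X \<otimes>\<^bsub>G0\<^esub> ?Y) = (?X' \<otimes>\<^bsub>G0\<^esub> ?Y') \<otimes>\<^bsub>G0\<^esub> (?A \<otimes>\<^bsub>G0\<^esub> ?C)"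
        using K comm unfolding mG by metis
      then show ?thesis using cs by (simp add: G.gn7)
    qed
    also have "\<dots> = f (J \<union> {a,c}) \<otimes>\<^bsub>G0\<^esub> f (J \<union> {b,d})"
      unfolding fv[OF nJ(1,3) dd(3) inE(1,3) B3] fv[OF nJ(2,4) dd(4) inE(2,4) B4] by (rule G.gm[OF cs(6) cs(5) cs(8) cs(7), symmetric])
    finally show ?thesis .
  qed
  have CORE: "core G0 E BB r f"
    unfolding core_def core_axioms_def using cg mr fc Qf by blast
  obtain c d where c: "c \<in> carrier G0" and d: "d \<in> E \<rightarrow> carrier G0"
    and fB: "\<And>B. B \<in> BB \<Longrightarrow> f B = c \<otimes>\<^bsub>G0\<^esub> finprod G0 d B"
    using core.core_main[OF CORE] by blast
  show ?thesis unfolding rescaling_equiv_def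
  proof (intro exI conjI ballI)
    show "c \<noteq> zero" using c by (simp add: G0s)
    show "\<And>e. e \<in> E \<Longrightarrow> d e \<noteq> zero" using d by (auto simp: G0s)
    fix xs assume tx: "xs \<in> tuples E r"
    show "\<Delta>' xs = pm c (pm (foldr (\<lambda>x acc. pm (d x) acc) xs one) (\<Delta> xs))"
    proof (cases "set xs \<in> BB")
      case True
      have lx: "length xs = r" "set xs \<subseteq> E" using tx unfolding tuples_def by auto
      have dx: "distinct xs" using card_distinct BE(3)[OF True] lx by metis
      have nz: "\<Delta> xs \<noteq> zero" using R1(1)[OF tx] True by simp
      have "f (set xs) = pm (\<Delta>' xs) (iv (\<Delta> xs))" using fS[OF dx True] .
      then have "\<Delta>' xs = pm (f (set xs)) (\<Delta> xs)" by (simp add: assoc ivl[OF nz] rone)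
      also have "f (set xs) = pm c (foldr (\<lambda>x acc. pm (d x) acc) xs one)"
        using fB[OF True] foldr_fp[OF d dx lx(2)] by (simp add: G0s)
      finally show ?thesis by (simp add: assoc)
    next
      case False
      then have "\<Delta> xs = zero" "\<Delta>' xs = zero" using R1[OF tx] by auto
      then show ?thesis by (simp add: rzero)
    qed
  qed
qed

end

theorem mainTheorem12:
  fixes pm :: "'p \<Rightarrow> 'p \<Rightarrow> 'p" and one zero :: 'p and N :: "('p \<times> 'p \<times> 'p) set"
    and E :: "'e set" and \<B> :: "'e set set" and r :: nat
    and \<Delta> \<Delta>' :: "'e list \<Rightarrow> 'p"
  assumes "pasture pm one zero N"
    and "\<forall>z w. fundamental pm one zero N z \<and> fundamental pm one zero N w \<longrightarrow> z = w"
    and "matroid_rank E \<B> r"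
    and "P_rep pm one zero N E \<B> r \<Delta>"
    and "P_rep pm one zero N E \<B> r \<Delta>'"
  shows "rescaling_equiv pm one zero E r \<Delta> \<Delta>'"
proof -
  have P: "past pm one zero N" by (rule past.intro) (rule assms(1))
  show ?thesis by (rule past.main[OF P assms(2) assms(3) assms(4) assms(5)])
qed

end
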